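(* Let $g\ge1$, $n\ge3$, $k\in\{1,\dots,n\}$, and let $y\in A_g^n$ be a point at which $f_k$ attains its minimum on $A_g^n$. \begin{enumerate} \item If $k=n$, then $f_n(y)=g/t_{g,n}^2$ and $y=y(g,n,n)$. \item If $k=n-1$ and $(n,g)=(3,1)$, then $f_2(y)=1/9$ and $y=y(1,3,1)$. If $k=n-1$ and $(n,g)\ne(3,1)$, then $f_{n-1}(y)=\dfrac{g}{2t_{g,n-1}^2}$ and $y$ is one of $y(2,3,1)$, $y(1,4,2)$, $y(g,n,n-1)$. \item If $k=n-2$: if $n=4$ and $g\in\{1,2\}$, then $f_2(y)=1/(16g^2)$ and $y=y(g,4,1)$; if $(n,g)=(5,1)$, then $f_3(y)=1/128$ and $y=y(1,5,2)$; in all other cases $f_{n-2}(y)=\dfrac{g}{3t_{g,n-2}^2}$ and $y$ is $y(3,4,1)$ or $y(g,n,n-2)$. \end{enumerate}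
   Context: For $g,n\ge1$, $A_g^n\subseteq\mathbb{R}^n$ is the set of $(x_1,\dots,x_n)$ with $x_1\ge\dots\ge x_n\ge0$, $x_1+\dots+x_n=1/g$, and $x_1\cdots x_k\le g(x_{k+1}+\dots+x_n)$ for all $k=1,\dots,n-1$. $f_k(x)=x_1\cdots x_k$ on $A_g^n$. Sylvester sequences: $s_{g,1}=g+1$, $s_{g,k+1}=s_{g,k}(s_{g,k}-1)+1$, $t_{g,k}=s_{g,k}-1$. $y(g,n,k)=\big(\tfrac1{s_{g,1}},\dots,\tfrac1{s_{g,k-1}},\tfrac{1}{(n-k+1)t_{g,k}},\dots,\tfrac{1}{(n-k+1)t_{g,k}}\big)$ with the last entry repeated $n-k+1$ times. *)

theory Defs
  imports Complex_Main
begin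

text \<open>Points of R^n are represented as real lists of length n; entry x_i is xs ! (i-1).\<close>

definition A_set :: "nat \<Rightarrow> nat \<Rightarrow> real list set" where
  "A_set g n = {x. length x = n
      \<and> (\<forall>i j. i \<le> j \<and> j < n \<longrightarrow> x ! j \<le> x ! i)
      \<and> (\<forall>i<n. 0 \<le> x ! i)
      \<and> sum_list x = 1 / real g
      \<and> (\<forall>k. 1 \<le> k \<and> k \<le> n - 1 \<longrightarrow> prod_list (take k x) \<le> real g * sum_list (drop k x))}"

definition f_prod :: "nat \<Rightarrow> real list \<Rightarrow> real" where
  "f_prod k x = prod_list (take k x)"

text \<open>Sylvester sequence s_{g,k} for k >= 1 (the value at k = 0 is an unused dummy).\<close>
fun sylv :: "nat \<Rightarrow> nat \<Rightarrow> nat" where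
  "sylv g 0 = 0"
| "sylv g (Suc 0) = g + 1"
| "sylv g (Suc (Suc k)) = sylv g (Suc k) * (sylv g (Suc k) - 1) + 1"

definition tsylv :: "nat \<Rightarrow> nat \<Rightarrow> nat" where
  "tsylv g k = sylv g k - 1"

definition ypt :: "nat \<Rightarrow> nat \<Rightarrow> nat \<Rightarrow> real list" where
  "ypt g n k = map (\<lambda>i. 1 / real (sylv g i)) [1..<k]
      @ replicate (n - k + 1) (1 / (real (n - k + 1) * real (tsylv g k)))"

end

theory Submission
  imports Defs
begin


lemma prod_take_nth: "l \<le> length xs \<Longrightarrow> prod_list (take l xs) = (\<Prod>i<l. xs ! i)"
proof (induction l)
  case 0 then show ?case by simp
next
  case (Suc l)
  then have "take (Suc l) xs = take l xs @ [xs ! l]" by (simp add: take_Suc_conv_app_nth)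
  then show ?case using Suc by simp
qed

lemma sum_drop_nth: "sum_list (drop l xs) = (\<Sum>i\<in>{l..<length xs}. xs ! i)"
proof -
  have "sum_list (drop l xs) = (\<Sum>i<length (drop l xs). drop l xs ! i)"
    by (simp add: sum_list_sum_nth atLeast0LessThan)
  also have "\<dots> = (\<Sum>i\<in>{l..<length xs}. xs ! i)"
  proof (cases "l \<le> length xs")
    case True
    show ?thesis
      apply (rule sum.reindex_bij_witness[where i="\<lambda>i. i - l" and j="\<lambda>i. i + l"])
      using True by (auto simp: add.commute)
  next
    case False then show ?thesis by simp
  qed
  finally show ?thesis .
qed

lemma sorted_from_adj:
  assumes "\<forall>i. Suc i < n \<longrightarrow> f (Suc i) \<le> (f i :: real)" "i \<le> j" "j < n"
  shows "f j \<le> f i"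
  using assms(2,3)
proof (induction j)
  case 0 then show ?case by simp
next
  case (Suc j)
  show ?case
  proof (cases "i = Suc j")
    case True then show ?thesis by simp
  next
    case False
    then have "f j \<le> f i" using Suc by auto
    moreover have "f (Suc j) \<le> f j" using assms(1) Suc by auto
    ultimately show ?thesis by linarith
  qed
qed

lemma A_set_iff:
  "x \<in> A_set g n \<longleftrightarrow> length x = n \<and> (\<forall>i. Suc i < n \<longrightarrow> x!(Suc i) \<le> x!i)
     \<and> (\<forall>i<n. 0 \<le> x!i) \<and> (\<Sum>i<n. x!i) = 1 / real g
     \<and> (\<forall>l. 1 \<le> l \<and> l \<le> n - 1 \<longrightarrow> (\<Prod>i<l. x!i) \<le> real g * (\<Sum>i\<in>{l..<n}. x!i))"
proof -
  have s: "length x = n \<Longrightarrow> sum_list x = (\<Sum>i<n. x!i)"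
    by (simp add: sum_list_sum_nth atLeast0LessThan)
  have p: "length x = n \<Longrightarrow> 1 \<le> l \<and> l \<le> n - 1 \<Longrightarrow> prod_list (take l x) = (\<Prod>i<l. x!i)" for l
    by (rule prod_take_nth) auto
  have o: "length x = n \<Longrightarrow> (\<forall>i j. i \<le> j \<and> j < n \<longrightarrow> x ! j \<le> x ! i) \<longleftrightarrow> (\<forall>i. Suc i < n \<longrightarrow> x!(Suc i) \<le> x!i)"
    using sorted_from_adj[of n "\<lambda>i. x!i"] by auto
  show ?thesis unfolding A_set_def using s p o sum_drop_nth[of _ x] by auto
qed

section \<open>Sylvester\<close>

lemma sylv_Suc_ge: "sylv g (Suc i) \<ge> g + 1"
proof (induction i)
  case 0 then show ?case by simp
next
  case (Suc i)
  have "sylv g (Suc i) * (sylv g (Suc i) - 1) + 1 \<ge> sylv g (Suc i)"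
    by (cases "sylv g (Suc i)") auto
  then show ?case using Suc by simp
qed

lemma tsylv_1: "tsylv g 1 = g" by (simp add: tsylv_def)

lemma sylv_eq_t: "real (sylv g (Suc i)) = real (tsylv g (Suc i)) + 1"
  using sylv_Suc_ge[of g i] by (simp add: tsylv_def of_nat_diff)

lemma tsylv_SS: "real (tsylv g (Suc (Suc i))) = real (tsylv g (Suc i)) * (real (tsylv g (Suc i)) + 1)"
proof -
  have "tsylv g (Suc (Suc i)) = sylv g (Suc i) * (sylv g (Suc i) - 1)" by (simp add: tsylv_def)
  then have "real (tsylv g (Suc (Suc i))) = real (sylv g (Suc i)) * real (tsylv g (Suc i))"
    by (simp add: tsylv_def)
  then show ?thesis using sylv_eq_t[of g i] by (simp add: mult.commute)
qed

lemma tsylv_ge1: "g \<ge> 1 \<Longrightarrow> i \<ge> 1 \<Longrightarrow> real (tsylv g i) \<ge> 1"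
  using sylv_Suc_ge[of g "i - 1"] by (cases i) (auto simp: tsylv_def)

lemma tsylv_pos: "g \<ge> 1 \<Longrightarrow> i \<ge> 1 \<Longrightarrow> real (tsylv g i) > 0"
  using tsylv_ge1[of g i] by linarith

lemma tsylv_mono_Suc: "g \<ge> 1 \<Longrightarrow> i \<ge> 1 \<Longrightarrow> real (tsylv g i) \<le> real (tsylv g (Suc i))"
proof -
  assume a: "g \<ge> 1" "i \<ge> 1"
  then obtain i' where i': "i = Suc i'" by (cases i) auto
  have h: "real (tsylv g i) \<ge> 1" using tsylv_ge1 a by auto
  have "real (tsylv g i) * 1 \<le> real (tsylv g i) * (real (tsylv g i) + 1)"
    by (rule mult_left_mono) (use h in auto)
  then show ?thesis using tsylv_SS[of g i'] i' by simp
qed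

lemma tsylv_mono: "g \<ge> 1 \<Longrightarrow> 1 \<le> i \<Longrightarrow> i \<le> j \<Longrightarrow> real (tsylv g i) \<le> real (tsylv g j)"
proof (induction j)
  case 0 then show ?case by simp
next
  case (Suc j)
  show ?case
  proof (cases "i = Suc j")
    case True then show ?thesis by simp
  next
    case False
    then have "real (tsylv g i) \<le> real (tsylv g j)" using Suc by auto
    also have "\<dots> \<le> real (tsylv g (Suc j))" using tsylv_mono_Suc[of g j] Suc False by auto
    finally show ?thesis .
  qed
qed

lemma tsylv_2: "real (tsylv g 2) = real g * (real g + 1)"
  using tsylv_SS[of g 0] by (simp add: numeral_2_eq_2 tsylv_def)

lemma tsylv_ge2: "g \<ge> 1 \<Longrightarrow> i \<ge> 2 \<Longrightarrow> real (tsylv g i) \<ge> 2"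
proof -
  assume a: "g \<ge> 1" "i \<ge> 2"
  have g1: "real g \<ge> 1" using a by simp
  have "real g * (real g + 1) \<ge> 1 * 2" by (rule mult_mono) (use g1 in auto)
  then have "real (tsylv g 2) \<ge> 2" using tsylv_2[of g] by simp
  then show ?thesis using tsylv_mono[of g 2 i] a by auto
qed

lemma tsylv_ge6: "g \<ge> 1 \<Longrightarrow> i \<ge> 3 \<Longrightarrow> real (tsylv g i) \<ge> 6"
proof -
  assume a: "g \<ge> 1" "i \<ge> 3"
  have h: "real (tsylv g 2) \<ge> 2" using tsylv_ge2 a by auto
  have "real (tsylv g 2) * (real (tsylv g 2) + 1) \<ge> 2 * 3" by (rule mult_mono) (use h in auto)
  then have "real (tsylv g 3) \<ge> 6" using tsylv_SS[of g 1] by (simp add: numeral_3_eq_3 numeral_2_eq_2)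
  then show ?thesis using tsylv_mono[of g 3 i] a by auto
qed

lemma prod_inv_sylv: "g \<ge> 1 \<Longrightarrow> (\<Prod>i<m. 1 / real (sylv g (Suc i))) = real g / real (tsylv g (Suc m))"
proof (induction m)
  case 0 then show ?case using tsylv_1[of g] by simp
next
  case (Suc m)
  have t: "real (tsylv g (Suc m)) > 0" using tsylv_pos Suc by auto
  have "(\<Prod>i<Suc m. 1 / real (sylv g (Suc i))) = real g / real (tsylv g (Suc m)) * (1 / (real (tsylv g (Suc m)) + 1))"
    using Suc sylv_eq_t[of g m] by simp
  also have "\<dots> = real g / real (tsylv g (Suc (Suc m)))" using tsylv_SS[of g m] t by (simp add: field_simps)
  finally show ?case .
qed

lemma sum_inv_sylv: "g \<ge> 1 \<Longrightarrow> l \<le> m \<Longrightarrow>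
   (\<Sum>i\<in>{l..<m}. 1 / real (sylv g (Suc i))) = 1 / real (tsylv g (Suc l)) - 1 / real (tsylv g (Suc m))"
proof (induction m)
  case 0 then show ?case by simp
next
  case (Suc m)
  show ?case
  proof (cases "l = Suc m")
    case True then show ?thesis by simp
  next
    case False
    then have lm: "l \<le> m" using Suc by auto
    have t: "real (tsylv g (Suc m)) > 0" using tsylv_pos Suc by auto
    have "(\<Sum>i\<in>{l..<Suc m}. 1 / real (sylv g (Suc i))) = (\<Sum>i\<in>{l..<m}. 1 / real (sylv g (Suc i))) + 1 / real (sylv g (Suc m))"
      using lm by simp
    also have "\<dots> = 1 / real (tsylv g (Suc l)) - 1 / real (tsylv g (Suc m)) + 1 / (real (tsylv g (Suc m)) + 1)"
      using Suc lm sylv_eq_t[of g m] by simp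
    also have "\<dots> = 1 / real (tsylv g (Suc l)) - 1 / real (tsylv g (Suc (Suc m)))"
    proof -
      have "1 / (real (tsylv g (Suc m)) + 1) - 1 / real (tsylv g (Suc m)) = - 1 / (real (tsylv g (Suc m)) * (real (tsylv g (Suc m)) + 1))"
        using t by (simp add: field_simps)
      then show ?thesis using tsylv_SS[of g m] by simp
    qed
    finally show ?thesis .
  qed
qed



lemma ypt_length: "1 \<le> J \<Longrightarrow> J \<le> n \<Longrightarrow> length (ypt g n J) = n"
  by (simp add: ypt_def)

lemma ypt_nth_lo: "i < J - 1 \<Longrightarrow> ypt g n J ! i = 1 / real (sylv g (Suc i))"
  by (simp add: ypt_def nth_append)

lemma ypt_nth_hi: "1 \<le> J \<Longrightarrow> J \<le> n \<Longrightarrow> J - 1 \<le> i \<Longrightarrow> i < n \<Longrightarrow>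
   ypt g n J ! i = 1 / (real (n - J + 1) * real (tsylv g J))"
  unfolding ypt_def by (simp add: nth_append del: replicate.simps)

lemma ypt_prod_prefix:
  assumes "g \<ge> 1" "1 \<le> J" "J \<le> n" "l \<le> J - 1"
  shows "(\<Prod>i<l. ypt g n J ! i) = real g / real (tsylv g (Suc l))"
proof -
  have "(\<Prod>i<l. ypt g n J ! i) = (\<Prod>i<l. 1 / real (sylv g (Suc i)))"
    by (rule prod.cong) (use assms in \<open>auto simp: ypt_nth_lo\<close>)
  then show ?thesis using prod_inv_sylv assms by simp
qed

lemma ypt_sum_suffix:
  assumes "g \<ge> 1" "1 \<le> J" "J \<le> n" "l \<le> J - 1"
  shows "(\<Sum>i\<in>{l..<n}. ypt g n J ! i) = 1 / real (tsylv g (Suc l))"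
proof -
  let ?c = "1 / (real (n - J + 1) * real (tsylv g J))"
  have "(\<Sum>i\<in>{l..<n}. ypt g n J ! i) = (\<Sum>i\<in>{l..<J-1}. ypt g n J ! i) + (\<Sum>i\<in>{J-1..<n}. ypt g n J ! i)"
    using assms by (simp add: sum.atLeastLessThan_concat)
  also have "(\<Sum>i\<in>{l..<J-1}. ypt g n J ! i) = (\<Sum>i\<in>{l..<J-1}. 1 / real (sylv g (Suc i)))"
    by (rule sum.cong) (auto simp: ypt_nth_lo)
  also have "\<dots> = 1 / real (tsylv g (Suc l)) - 1 / real (tsylv g J)"
    using sum_inv_sylv[of g l "J - 1"] assms by simp
  also have "(\<Sum>i\<in>{J-1..<n}. ypt g n J ! i) = (\<Sum>i\<in>{J-1..<n}. ?c)"
    by (rule sum.cong) (use assms in \<open>auto simp: ypt_nth_hi\<close>)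
  also have "\<dots> = 1 / real (tsylv g J)"
  proof -
    have "card {J-1..<n} = n - J + 1" using assms by simp
    then have "(\<Sum>i\<in>{J-1..<n}. ?c) = real (n - J + 1) * ?c" by (simp only: sum_constant)
    moreover have "real (tsylv g J) > 0" using tsylv_pos assms by auto
    moreover have "real (n - J + 1) > 0" by simp
    ultimately show ?thesis by (metis divide_divide_eq_left' nonzero_mult_div_cancel_left order_less_irrefl times_divide_eq_right)
  qed
  finally show ?thesis by simp
qed

lemma ypt_prod_tail:
  assumes "g \<ge> 1" "1 \<le> J" "J \<le> l" "l \<le> n"
  shows "(\<Prod>i<l. ypt g n J ! i) = real g / real (tsylv g J) * (1 / (real (n - J + 1) * real (tsylv g J))) ^ (l - J + 1)"
proof -
  let ?c = "1 / (real (n - J + 1) * real (tsylv g J))"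
  have "(\<Prod>i<l. ypt g n J ! i) = (\<Prod>i\<in>{0..<J-1}. ypt g n J ! i) * (\<Prod>i\<in>{J-1..<l}. ypt g n J ! i)"
    using assms by (simp add: prod.atLeastLessThan_concat atLeast0LessThan[symmetric])
  also have "(\<Prod>i\<in>{0..<J-1}. ypt g n J ! i) = real g / real (tsylv g J)"
    using ypt_prod_prefix[of g J n "J - 1"] assms by (simp add: atLeast0LessThan)
  also have "(\<Prod>i\<in>{J-1..<l}. ypt g n J ! i) = (\<Prod>i\<in>{J-1..<l}. ?c)"
    by (rule prod.cong) (use assms in \<open>auto simp: ypt_nth_hi\<close>)
  also have "\<dots> = ?c ^ (l - J + 1)"
  proof -
    have "card {J-1..<l} = l - J + 1" using assms by simp
    then show ?thesis by (simp only: prod_constant)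
  qed
  finally show ?thesis .
qed

lemma f_prod_ypt:
  assumes "g \<ge> 1" "1 \<le> J" "J \<le> k" "k \<le> n"
  shows "f_prod k (ypt g n J) = real g / real (tsylv g J) * (1 / (real (n - J + 1) * real (tsylv g J))) ^ (k - J + 1)"
  using ypt_prod_tail[OF assms] prod_take_nth[of k "ypt g n J"] ypt_length[of J n g] assms
  by (simp add: f_prod_def)

lemma ypt_in_A:
  assumes g: "g \<ge> 1" and J: "1 \<le> J" "J \<le> n"
  shows "ypt g n J \<in> A_set g n"
proof -
  let ?y = "ypt g n J"
  let ?c = "1 / (real (n - J + 1) * real (tsylv g J))"
  have TJ: "real (tsylv g J) \<ge> 1" using tsylv_ge1 g J by auto
  have c0: "0 < ?c" using TJ by simp
  have c1: "?c \<le> 1 / real (tsylv g J)"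
    using TJ by (simp add: divide_simps)
  have c2: "?c \<le> 1" using c1 TJ by (smt (verit) divide_le_eq_1)
  have ord: "\<forall>i. Suc i < n \<longrightarrow> ?y!(Suc i) \<le> ?y!i"
  proof (intro allI impI)
    fix i assume i: "Suc i < n"
    consider "Suc i < J - 1" | "Suc i = J - 1" | "Suc i > J - 1" by linarith
    then show "?y!(Suc i) \<le> ?y!i"
    proof cases
      case 1
      have "?y!(Suc i) = 1 / real (sylv g (Suc (Suc i)))" using 1 by (rule ypt_nth_lo)
      also have "\<dots> = 1 / (real (tsylv g (Suc (Suc i))) + 1)" by (simp only: sylv_eq_t)
      finally have a1: "?y!(Suc i) = 1 / (real (tsylv g (Suc (Suc i))) + 1)" .
      have "?y!i = 1 / real (sylv g (Suc i))" using 1 by (intro ypt_nth_lo) simp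
      also have "\<dots> = 1 / (real (tsylv g (Suc i)) + 1)" by (simp only: sylv_eq_t)
      finally have a2: "?y!i = 1 / (real (tsylv g (Suc i)) + 1)" .
      note a1 a2
      moreover have "real (tsylv g (Suc i)) \<le> real (tsylv g (Suc (Suc i)))" using tsylv_mono_Suc g by auto
      moreover have "real (tsylv g (Suc i)) \<ge> 1" using tsylv_ge1 g by auto
      ultimately show ?thesis by (simp add: frac_le)
    next
      case 2
      then have e: "J = Suc (Suc i)" by linarith
      have "?y!i = 1 / real (sylv g (Suc i))" using 2 by (intro ypt_nth_lo) simp
      also have "\<dots> = 1 / (real (tsylv g (Suc i)) + 1)" by (simp only: sylv_eq_t)
      finally have "?y!i = 1 / (real (tsylv g (Suc i)) + 1)" .
      moreover have "?y!(Suc i) = ?c" using 2 J i by (simp add: ypt_nth_hi)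
      moreover have "real (tsylv g J) = real (tsylv g (Suc i)) * (real (tsylv g (Suc i)) + 1)"
        using e tsylv_SS by simp
      moreover have "real (tsylv g (Suc i)) \<ge> 1" using tsylv_ge1 g by auto
      ultimately show ?thesis using c1
        by (smt (verit) frac_le mult_le_cancel_right1 of_nat_0_le_iff)
    next
      case 3
      then show ?thesis using J i by (simp add: ypt_nth_hi)
    qed
  qed
  have nn: "\<forall>i<n. 0 \<le> ?y!i"
  proof (intro allI impI)
    fix i assume "i < n"
    then show "0 \<le> ?y!i" using J by (cases "i < J - 1") (auto simp: ypt_nth_lo ypt_nth_hi)
  qed
  have sm: "(\<Sum>i<n. ?y!i) = 1 / real g"
    using ypt_sum_suffix[of g J n 0] g J tsylv_1[of g] by (simp add: atLeast0LessThan)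
  have cons: "\<forall>l. 1 \<le> l \<and> l \<le> n - 1 \<longrightarrow> (\<Prod>i<l. ?y!i) \<le> real g * (\<Sum>i\<in>{l..<n}. ?y!i)"
  proof (intro allI impI)
    fix l assume l: "1 \<le> l \<and> l \<le> n - 1"
    show "(\<Prod>i<l. ?y!i) \<le> real g * (\<Sum>i\<in>{l..<n}. ?y!i)"
    proof (cases "l \<le> J - 1")
      case True
      then show ?thesis using ypt_prod_prefix[of g J n l] ypt_sum_suffix[of g J n l] g J by simp
    next
      case False
      have s: "(\<Sum>i\<in>{l..<n}. ?y!i) = real (n - l) * ?c"
      proof -
        have "(\<Sum>i\<in>{l..<n}. ?y!i) = (\<Sum>i\<in>{l..<n}. ?c)"
          by (rule sum.cong) (use False J in \<open>auto simp: ypt_nth_hi\<close>)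
        then show ?thesis by simp
      qed
      have p: "(\<Prod>i<l. ?y!i) = real g / real (tsylv g J) * ?c ^ (l - J + 1)"
        using ypt_prod_tail[of g J l n] False J l g by simp
      have "?c ^ (l - J + 1) = ?c ^ (l - J) * ?c" by simp
      also have "\<dots> \<le> 1 * ?c" by (rule mult_right_mono) (use c0 c2 in \<open>auto intro: power_le_one\<close>)
      finally have "?c ^ (l - J + 1) \<le> ?c" by simp
      then have "real g / real (tsylv g J) * ?c ^ (l - J + 1) \<le> real g * 1 * ?c"
        using TJ g by (intro mult_mono) (auto simp: divide_simps)
      also have "\<dots> \<le> real g * (real (n - l) * ?c)"
      proof -
        have "real (n - l) \<ge> 1" using l by (simp add: of_nat_diff) arith
        then have "1 * ?c \<le> real (n - l) * ?c" using c0 by (intro mult_right_mono) auto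
        then show ?thesis by (simp only: mult.assoc) (intro mult_left_mono, auto)
      qed
      finally show ?thesis using s p by simp
    qed
  qed
  show ?thesis unfolding A_set_iff using ord nn sm cons ypt_length J by auto
qed



definition pert :: "real list \<Rightarrow> (nat \<Rightarrow> real) \<Rightarrow> real \<Rightarrow> real list" where
  "pert y v e = map (\<lambda>i. y!i + e * v i) [0..<length y]"

lemma pert_length[simp]: "length (pert y v e) = length y" by (simp add: pert_def)
lemma pert_nth[simp]: "i < length y \<Longrightarrow> pert y v e ! i = y!i + e * v i" by (simp add: pert_def)

lemma lin_tendsto: "((\<lambda>e::real. c + e * d) \<longlongrightarrow> c) (at_right 0)"
proof -
  have "((\<lambda>e::real. c + e * d) \<longlongrightarrow> c + 0 * d) (at_right 0)"
    by (intro tendsto_intros)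
  then show ?thesis by simp
qed

lemma ev_pos_lin: "c > 0 \<Longrightarrow> eventually (\<lambda>e::real. c + e * d > 0) (at_right 0)"
  using order_tendstoD(1)[OF lin_tendsto[of c d], of 0] by simp

lemma ev_epos: "eventually (\<lambda>e::real. e > 0) (at_right 0)"
  by (simp add: eventually_at_right_less)

lemma slack_ev:
  fixes y :: "real list"
  assumes "(\<Prod>i<l. y!i) < real g * (\<Sum>i\<in>{l..<n}. y!i)"
  shows "eventually (\<lambda>e. (\<Prod>i<l. y!i + e * v i) \<le> real g * (\<Sum>i\<in>{l..<n}. y!i + e * v i)) (at_right 0)"
proof -
  have "((\<lambda>e. real g * (\<Sum>i\<in>{l..<n}. y!i + e * v i) - (\<Prod>i<l. y!i + e * v i)) \<longlongrightarrow>
        real g * (\<Sum>i\<in>{l..<n}. y!i + 0 * v i) - (\<Prod>i<l. y!i + 0 * v i)) (at_right 0)"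
    by (intro tendsto_intros)
  then have "((\<lambda>e. real g * (\<Sum>i\<in>{l..<n}. y!i + e * v i) - (\<Prod>i<l. y!i + e * v i)) \<longlongrightarrow>
        real g * (\<Sum>i\<in>{l..<n}. y!i) - (\<Prod>i<l. y!i)) (at_right 0)" by simp
  from order_tendstoD(1)[OF this, of 0] assms
  have "eventually (\<lambda>e. 0 < real g * (\<Sum>i\<in>{l..<n}. y!i + e * v i) - (\<Prod>i<l. y!i + e * v i)) (at_right 0)"
    by simp
  then show ?thesis by (rule eventually_mono) simp
qed

lemma exact_ev:
  fixes y :: "real list"
  assumes "(\<Prod>i<l. y!i) \<le> real g * (\<Sum>i\<in>{l..<n}. y!i)"
    and "\<forall>i<l. v i = 0" and "(\<Sum>i\<in>{l..<n}. v i) = 0"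
  shows "eventually (\<lambda>e. (\<Prod>i<l. y!i + e * v i) \<le> real g * (\<Sum>i\<in>{l..<n}. y!i + e * v i)) (at_right 0)"
proof (rule always_eventually, intro allI)
  fix e :: real
  have "(\<Prod>i<l. y!i + e * v i) = (\<Prod>i<l. y!i)" using assms(2) by simp
  moreover have "(\<Sum>i\<in>{l..<n}. y!i + e * v i) = (\<Sum>i\<in>{l..<n}. y!i) + e * (\<Sum>i\<in>{l..<n}. v i)"
    by (simp add: sum.distrib sum_distrib_left)
  ultimately show "(\<Prod>i<l. y!i + e * v i) \<le> real g * (\<Sum>i\<in>{l..<n}. y!i + e * v i)"
    using assms(1,3) by simp
qed

lemma pert_in_A:
  assumes yA: "y \<in> A_set g n" and pos: "\<forall>i<n. 0 < y!i" and vs: "(\<Sum>i<n. v i) = 0"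
    and ord: "\<forall>i. Suc i < n \<longrightarrow> y!(Suc i) < y!i \<or> v (Suc i) \<le> v i"
    and cons: "\<forall>l. 1 \<le> l \<and> l \<le> n-1 \<longrightarrow>
       eventually (\<lambda>e. (\<Prod>i<l. y!i + e * v i) \<le> real g * (\<Sum>i\<in>{l..<n}. y!i + e * v i)) (at_right 0)"
  shows "eventually (\<lambda>e. pert y v e \<in> A_set g n) (at_right 0)"
proof -
  have len: "length y = n" and yo: "\<forall>i. Suc i < n \<longrightarrow> y!(Suc i) \<le> y!i" and ysum: "(\<Sum>i<n. y!i) = 1 / real g"
    using yA unfolding A_set_iff by auto
  have E1: "eventually (\<lambda>e. \<forall>i\<in>{i. Suc i < n}. y!(Suc i) + e * v (Suc i) \<le> y!i + e * v i) (at_right 0)"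
  proof (rule eventually_ball_finite)
    show "finite {i. Suc i < n}" by (rule finite_subset[of _ "{..<n}"]) auto
    show "\<forall>i\<in>{i. Suc i < n}. eventually (\<lambda>e. y!(Suc i) + e * v (Suc i) \<le> y!i + e * v i) (at_right 0)"
    proof
      fix i assume "i \<in> {i. Suc i < n}"
      then have i: "Suc i < n" by simp
      show "eventually (\<lambda>e. y!(Suc i) + e * v (Suc i) \<le> y!i + e * v i) (at_right 0)"
      proof (cases "y!(Suc i) < y!i")
        case True
        have "eventually (\<lambda>e. (y!i - y!(Suc i)) + e * (v i - v (Suc i)) > 0) (at_right 0)"
          using ev_pos_lin True by simp
        then show ?thesis by (rule eventually_mono) (simp add: algebra_simps)
      next
        case False
        then have "v (Suc i) \<le> v i" "y!(Suc i) \<le> y!i" using ord yo i by auto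
        then show ?thesis using ev_epos by (rule_tac eventually_mono[OF ev_epos])
             (smt (verit) mult_left_mono)
      qed
    qed
  qed
  have E2: "eventually (\<lambda>e. \<forall>i\<in>{..<n}. 0 < y!i + e * v i) (at_right 0)"
    by (rule eventually_ball_finite) (use pos ev_pos_lin in auto)
  have E3: "eventually (\<lambda>e. \<forall>l\<in>{l. 1 \<le> l \<and> l \<le> n-1}. (\<Prod>i<l. y!i + e * v i) \<le> real g * (\<Sum>i\<in>{l..<n}. y!i + e * v i)) (at_right 0)"
    by (rule eventually_ball_finite) (use cons in auto)
  show ?thesis
  proof (rule eventually_mono[OF eventually_conj[OF E1 eventually_conj[OF E2 E3]]])
    fix e assume H: "(\<forall>i\<in>{i. Suc i < n}. y!(Suc i) + e * v (Suc i) \<le> y!i + e * v i) \<and>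
      (\<forall>i\<in>{..<n}. 0 < y!i + e * v i) \<and>
      (\<forall>l\<in>{l. 1 \<le> l \<and> l \<le> n-1}. (\<Prod>i<l. y!i + e * v i) \<le> real g * (\<Sum>i\<in>{l..<n}. y!i + e * v i))"
    let ?z = "pert y v e"
    have s: "(\<Sum>i<n. ?z!i) = 1 / real g"
    proof -
      have "(\<Sum>i<n. ?z!i) = (\<Sum>i<n. y!i + e * v i)" using len by simp
      also have "\<dots> = (\<Sum>i<n. y!i) + e * (\<Sum>i<n. v i)" by (simp add: sum.distrib sum_distrib_left)
      finally show ?thesis using ysum vs by simp
    qed
    have p: "(\<Prod>i<l. ?z!i) = (\<Prod>i<l. y!i + e * v i)" if "l \<le> n" for l
      using that len by (intro prod.cong) auto
    have q: "(\<Sum>i\<in>{l..<n}. ?z!i) = (\<Sum>i\<in>{l..<n}. y!i + e * v i)" for l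
      using len by (intro sum.cong) auto
    show "?z \<in> A_set g n" unfolding A_set_iff
      using H len s p q by (auto simp: less_imp_le)
  qed
qed

lemma prod_strict_less:
  fixes f h :: "nat \<Rightarrow> real"
  assumes "finite A" "i0 \<in> A" "\<forall>i\<in>A. 0 < f i \<and> f i \<le> h i" "f i0 < h i0"
  shows "prod f A < prod h A"
proof -
  have a: "prod f A = f i0 * prod f (A - {i0})" "prod h A = h i0 * prod h (A - {i0})"
    using assms prod.remove by auto
  have b: "0 < prod f (A - {i0})" using assms by (intro prod_pos) auto
  have c: "prod f (A - {i0}) \<le> prod h (A - {i0})" using assms by (intro prod_mono) auto
  have "f i0 * prod f (A - {i0}) < h i0 * prod f (A - {i0})" using b assms(4) by simp
  also have "\<dots> \<le> h i0 * prod h (A - {i0})" using c assms by (intro mult_left_mono) auto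
  finally show ?thesis using a by simp
qed

lemma min_contra:
  assumes "\<forall>x\<in>A_set g n. f_prod k y \<le> f_prod k x"
    and "eventually (\<lambda>e. pert y v e \<in> A_set g n \<and> f_prod k (pert y v e) < f_prod k y) (at_right 0)"
  shows False
proof -
  obtain e where "pert y v e \<in> A_set g n \<and> f_prod k (pert y v e) < f_prod k y"
    using eventually_happens'[OF _ assms(2)] by auto
  then show False using assms(1) by force
qed

lemma f_prod_pert: "k \<le> length y \<Longrightarrow> f_prod k (pert y v e) = (\<Prod>i<k. y!i + e * v i)"
  unfolding f_prod_def by (subst prod_take_nth) auto

lemma f_prod_nth: "k \<le> length y \<Longrightarrow> f_prod k y = (\<Prod>i<k. y!i)"
  unfolding f_prod_def by (rule prod_take_nth)



definition tight :: "real list \<Rightarrow> nat \<Rightarrow> nat \<Rightarrow> nat \<Rightarrow> bool" where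
  "tight y g n l \<longleftrightarrow> (\<Prod>i<l. y!i) = real g * (\<Sum>i\<in>{l..<n}. y!i)"

lemma A_facts:
  assumes "y \<in> A_set g n"
  shows "length y = n" "\<And>i j. i \<le> j \<Longrightarrow> j < n \<Longrightarrow> y!j \<le> y!i" "\<And>i. i < n \<Longrightarrow> 0 \<le> y!i"
    "(\<Sum>i<n. y!i) = 1 / real g"
    "\<And>l. 1 \<le> l \<Longrightarrow> l \<le> n - 1 \<Longrightarrow> (\<Prod>i<l. y!i) \<le> real g * (\<Sum>i\<in>{l..<n}. y!i)"
proof -
  have o: "\<forall>i. Suc i < n \<longrightarrow> y!(Suc i) \<le> y!i" using assms unfolding A_set_iff by auto
  show "\<And>i j. i \<le> j \<Longrightarrow> j < n \<Longrightarrow> y!j \<le> y!i" using sorted_from_adj[OF o] by blast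
qed (use assms in \<open>auto simp: A_set_iff\<close>)

lemma sum_split_first: "l < n \<Longrightarrow> (\<Sum>i\<in>{l..<n}. f i) = f l + (\<Sum>i\<in>{Suc l..<n}. f i :: real)"
  by (simp add: sum.atLeast_Suc_lessThan)

lemma A_pos:
  assumes yA: "y \<in> A_set g n" and g: "g \<ge> 1"
  shows "\<forall>i<n. 0 < y!i"
proof (rule ccontr)
  assume "\<not> (\<forall>i<n. 0 < y!i)"
  then have ex: "\<exists>i. i < n \<and> y!i = 0" using A_facts(3)[OF yA] by force
  obtain m where m: "m < n \<and> y!m = 0" "\<forall>j<m. \<not> (j < n \<and> y!j = 0)"
    using ex exists_least_iff[of "\<lambda>i. i < n \<and> y!i = 0"] by blast
  have zero: "\<forall>i\<in>{m..<n}. y!i = 0"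
    using A_facts(2,3)[OF yA] m by (metis atLeastLessThan_iff order.antisym)
  show False
  proof (cases "m = 0")
    case True
    then have "(\<Sum>i<n. y!i) = 0" using zero by (simp add: atLeast0LessThan)
    then show False using A_facts(4)[OF yA] g by simp
  next
    case False
    have "(\<Prod>i<m. y!i) > 0" using m A_facts(3)[OF yA] by (intro prod_pos) (metis lessThan_iff order_le_less less_trans)
    moreover have "(\<Sum>i\<in>{m..<n}. y!i) = 0" using zero by simp
    moreover have "1 \<le> m" "m \<le> n - 1" using False m by auto
    ultimately show False using A_facts(5)[OF yA, of m] by simp
  qed
qed

lemma A_first_le:
  assumes yA: "y \<in> A_set g n" and g: "g \<ge> 1" and n: "n \<ge> 2"
  shows "y!0 \<le> 1 / (real g + 1)"
proof -
  have "(\<Sum>i<n. y!i) = y!0 + (\<Sum>i\<in>{1..<n}. y!i)"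
    using n sum_split_first[of 0 n] by (simp add: atLeast0LessThan)
  then have s: "(\<Sum>i\<in>{1..<n}. y!i) = 1 / real g - y!0" using A_facts(4)[OF yA] by simp
  have "y!0 \<le> real g * (1 / real g - y!0)" using A_facts(5)[OF yA, of 1] n s by simp
  then have "y!0 * (real g + 1) \<le> 1" using g by (simp add: algebra_simps)
  then show ?thesis using g by (simp add: field_simps)
qed

lemma tight_strict:
  assumes yA: "y \<in> A_set g n" and g: "g \<ge> 1" and n: "n \<ge> 3" and l: "1 \<le> l" "l \<le> n - 1"
    and t: "tight y g n l"
  shows "y!l < y!(l-1)"
proof (rule ccontr)
  assume "\<not> y!l < y!(l-1)"
  then have eq: "y!l = y!(l-1)" using A_facts(2)[OF yA, of "l-1" l] l by force
  define a where "a = y!(l-1)"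
  define R where "R = (\<Sum>i\<in>{l..<n}. y!i)"
  define P where "P = (\<Prod>i<l-1. y!i)"
  have pos: "\<forall>i<n. 0 < y!i" using A_pos yA g by auto
  have a0: "a > 0" using pos l a_def by auto
  obtain l' where l': "l = Suc l'" using l by (cases l) auto
  have Pl: "(\<Prod>i<l. y!i) = P * a" unfolding P_def a_def using l' by simp
  have Rl1: "(\<Sum>i\<in>{l-1..<n}. y!i) = a + R" unfolding a_def R_def using l sum_split_first[of "l-1" n]
    by simp
  have Pb: "P \<le> real g * (a + R)"
  proof (cases "l = 1")
    case True
    then have "P = 1" by (simp add: P_def)
    moreover have "a + R = 1 / real g" using Rl1 True A_facts(4)[OF yA] by (simp add: atLeast0LessThan)
    ultimately show ?thesis using g by simp
  next
    case False
    then show ?thesis using A_facts(5)[OF yA, of "l-1"] l Rl1 P_def by simp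
  qed
  have tR: "P * a = real g * R" using t Pl unfolding tight_def R_def by simp
  have "P * a \<le> real g * (a + R) * a" using Pb a0 by (intro mult_right_mono) auto
  then have "real g * R \<le> real g * (a + R) * a" using tR by simp
  then have Ra: "R \<le> (a + R) * a" using g by (simp add: mult.assoc)
  have ln: "l < n" using l n by simp
  have "(\<Sum>i\<in>{Suc l..<n}. y!i) \<ge> 0" using A_facts(3)[OF yA] by (intro sum_nonneg) auto
  then have Rge: "R \<ge> a" using sum_split_first[of l n "\<lambda>i. y!i"] ln eq unfolding R_def a_def by simp
  have a_le: "a \<le> 1 / 2"
  proof -
    have "a \<le> y!0" unfolding a_def using A_facts(2)[OF yA, of 0 "l-1"] l by simp
    also have "\<dots> \<le> 1 / (real g + 1)" using A_first_le yA g n by simp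
    also have "\<dots> \<le> 1 / 2" using g by (simp add: divide_simps)
    finally show ?thesis .
  qed
  have "a * (1 - a) \<le> R * (1 - a)" using Rge a_le by (intro mult_right_mono) auto
  also have "\<dots> \<le> a * a" using Ra by (simp add: algebra_simps)
  finally have "a * (1 - a) \<le> a * a" .
  then have "1 - a \<le> a" using a0 mult_le_cancel_left_pos[of a "1 - a" a] by simp
  then have "a \<ge> 1 / 2" by simp
  then have ah: "a = 1 / 2" using a_le by simp
  have yl: "y!l = 1/2" "y!(l-1) = 1/2" using eq ah a_def by auto
  obtain j where j: "j < n" "j \<noteq> l" "j \<noteq> l - 1"
  proof (cases "l = 1")
    case True then show ?thesis using that[of 2] n by auto
  next
    case False then show ?thesis using that[of 0] l by auto
  qed
  have "(\<Sum>i\<in>{l, l-1, j}. y!i) \<le> (\<Sum>i<n. y!i)"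
    using l j A_facts(3)[OF yA] by (intro sum_mono2) auto
  moreover have "(\<Sum>i\<in>{l, l-1, j}. y!i) = y!l + y!(l-1) + y!j" using j l by simp
  moreover have "y!j > 0" using pos j by auto
  ultimately have "1 < (\<Sum>i<n. y!i)" using yl by simp
  then show False using A_facts(4)[OF yA] g by (simp add: divide_simps)
qed

lemma tight_prefix:
  assumes yA: "y \<in> A_set g n" and g: "g \<ge> 1" and J: "J \<le> n"
    and t: "\<forall>l. 1 \<le> l \<and> l < J \<longrightarrow> tight y g n l"
  shows "l \<le> J - 1 \<Longrightarrow> (\<Prod>i<l. y!i) = real g / real (tsylv g (Suc l))
            \<and> (\<Sum>i\<in>{l..<n}. y!i) = 1 / real (tsylv g (Suc l))
            \<and> (\<forall>i<l. y!i = 1 / real (sylv g (Suc i)))"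
proof (induction l)
  case 0
  then show ?case using A_facts(4)[OF yA] tsylv_1[of g] g by (simp add: atLeast0LessThan)
next
  case (Suc l)
  define T where "T = real (tsylv g (Suc l))"
  have T0: "T > 0" using tsylv_pos g T_def by auto
  have IH: "(\<Prod>i<l. y!i) = real g / T" "(\<Sum>i\<in>{l..<n}. y!i) = 1 / T" "\<forall>i<l. y!i = 1 / real (sylv g (Suc i))"
    using Suc T_def by auto
  have ln: "l < n" using Suc J by auto
  have tl: "tight y g n (Suc l)" using t Suc by auto
  have P1: "(\<Prod>i<Suc l. y!i) = real g / T * y!l" using IH by simp
  have S1: "(\<Sum>i\<in>{Suc l..<n}. y!i) = 1 / T - y!l" using IH sum_split_first[of l n "\<lambda>i. y!i"] ln by simp
  have "real g / T * y!l = real g * (1 / T - y!l)" using tl P1 S1 unfolding tight_def by simp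
  then have "real g * (y!l / T) = real g * (1 / T - y!l)" by simp
  moreover have "real g \<noteq> 0" using g by simp
  ultimately have "y!l / T = 1 / T - y!l" by (metis mult_left_cancel)
  then have "y!l = 1 - y!l * T" using T0 by (simp add: field_simps)
  then have "y!l * (T + 1) = 1" by (simp add: algebra_simps)
  then have yl: "y!l = 1 / (T + 1)" using T0 by (simp add: field_simps)
  have Tn: "real (tsylv g (Suc (Suc l))) = T * (T + 1)" using tsylv_SS T_def by simp
  have "(\<Prod>i<Suc l. y!i) = real g / real (tsylv g (Suc (Suc l)))"
    using P1 yl Tn by simp
  moreover have "(\<Sum>i\<in>{Suc l..<n}. y!i) = 1 / real (tsylv g (Suc (Suc l)))"
    using S1 yl Tn T0 by (simp add: field_simps)
  moreover have "\<forall>i<Suc l. y!i = 1 / real (sylv g (Suc i))"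
    using IH yl sylv_eq_t[of g l] T_def less_Suc_eq by auto
  ultimately show ?case by blast
qed

lemma helper_div: fixes m a T :: real assumes "m \<noteq> 0" "m * a = 1 / T" shows "a = 1 / (m * T)"
  using assms by (cases "T = 0") (auto simp: field_simps)

lemma struct_to_ypt:
  assumes yA: "y \<in> A_set g n" and g: "g \<ge> 1" and J: "1 \<le> J" "J \<le> n"
    and t: "\<forall>l. 1 \<le> l \<and> l < J \<longrightarrow> tight y g n l"
    and tail0: "\<forall>i. J - 1 \<le> i \<and> i < n \<longrightarrow> y!i = y!(J-1)"
  shows "y = ypt g n J"
proof (rule nth_equalityI)
  define a where "a = y!(J-1)"
  have tail: "\<forall>i. J - 1 \<le> i \<and> i < n \<longrightarrow> y!i = a" using tail0 unfolding a_def by blast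
  show "length y = length (ypt g n J)" using A_facts(1)[OF yA] ypt_length J by simp
  have TP: "(\<Sum>i\<in>{J-1..<n}. y!i) = 1 / real (tsylv g J)" "\<forall>i<J-1. y!i = 1 / real (sylv g (Suc i))"
    using tight_prefix[OF yA g J(2) t, of "J-1"] J by auto
  have "(\<Sum>i\<in>{J-1..<n}. y!i) = (\<Sum>i\<in>{J-1..<n}. a)" using tail by (intro sum.cong) auto
  also have "\<dots> = real (n - J + 1) * a"
  proof -
    have "card {J-1..<n} = n - J + 1" using J by simp
    then show ?thesis by (simp only: sum_constant)
  qed
  finally have e: "real (n - J + 1) * a = 1 / real (tsylv g J)" using TP by simp
  have m0: "real (n - J + 1) \<noteq> 0" by (simp only: of_nat_eq_0_iff)
  have c: "a = 1 / (real (n - J + 1) * real (tsylv g J))"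
    using helper_div[OF m0 e] .
  fix i assume "i < length y"
  then have i: "i < n" using A_facts(1)[OF yA] by simp
  show "y!i = ypt g n J ! i"
  proof (cases "i < J - 1")
    case True then show ?thesis using TP ypt_nth_lo by simp
  next
    case False then show ?thesis using tail c i J ypt_nth_hi by simp
  qed
qed



lemma sum_ind_gt: "(\<Sum>i<n. if p < i then 1 else (0::real)) = real (n - Suc p)"
  by (induction n) (auto simp: of_nat_diff Suc_diff_le)

lemma sum_ind_le: "(\<Sum>i<n. if i \<le> r then 1 else (0::real)) = real (min n (Suc r))"
  by (induction n) (auto simp: min_def)

lemma sum_split_lt: "(l::nat) \<le> n \<Longrightarrow> (\<Sum>i<n. f i) = (\<Sum>i<l. f i) + (\<Sum>i\<in>{l..<n}. f i :: real)"
proof -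
  assume "l \<le> n"
  then have "{..<n} = {..<l} \<union> {l..<n}" by auto
  moreover have "{..<l} \<inter> {l..<n} = {}" by auto
  ultimately show ?thesis using sum.union_disjoint[of "{..<l}" "{l..<n}" f] by simp
qed

lemma prod_two_split:
  fixes p q l :: nat
  assumes "p \<noteq> q" "p < l" "q < l"
  shows "(\<Prod>i<l. f i) = f p * f q * (\<Prod>i\<in>{..<l} - {p} - {q}. f i :: real)"
proof -
  have "(\<Prod>i<l. f i) = f p * (\<Prod>i\<in>{..<l} - {p}. f i)" using assms prod.remove[of "{..<l}" p f] by simp
  also have "(\<Prod>i\<in>{..<l} - {p}. f i) = f q * (\<Prod>i\<in>{..<l} - {p} - {q}. f i)"
    using assms prod.remove[of "{..<l} - {p}" q f] by simp
  finally show ?thesis by simp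
qed

lemma pertA:
  assumes yA: "y \<in> A_set g n" and g: "g \<ge> 1" and pq: "p < q" "q < n"
    and op: "p = 0 \<or> y!p < y!(p-1)" and oq: "Suc q = n \<or> y!(Suc q) < y!q"
    and sl: "\<forall>l. p < l \<and> l \<le> q \<longrightarrow> (\<Prod>i<l. y!i) < real g * (\<Sum>i\<in>{l..<n}. y!i)"
    and k: "q < k" "k \<le> n"
    and mn: "\<forall>x\<in>A_set g n. f_prod k y \<le> f_prod k x"
  shows False
proof -
  define v where "v = (\<lambda>i. (if i = p then 1 else 0) - (if i = q then 1 else (0::real)))"
  have pos: "\<forall>i<n. 0 < y!i" using A_pos yA g by auto
  have len: "length y = n" using A_facts(1)[OF yA] .
  have vs: "(\<Sum>i<n. v i) = 0" unfolding v_def using pq by (simp add: sum_subtractf)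
  have ypq: "y!q \<le> y!p" using A_facts(2)[OF yA] pq by simp
  have ord: "\<forall>i. Suc i < n \<longrightarrow> y!(Suc i) < y!i \<or> v (Suc i) \<le> v i"
  proof (intro allI impI)
    fix i assume i: "Suc i < n"
    show "y!(Suc i) < y!i \<or> v (Suc i) \<le> v i"
    proof (cases "Suc i = p")
      case True then show ?thesis using op by auto
    next
      case False
      show ?thesis
      proof (cases "i = q")
        case True then show ?thesis using oq i by auto
      next
        case False
        then show ?thesis using \<open>Suc i \<noteq> p\<close> pq unfolding v_def by auto
      qed
    qed
  qed
  have ev_small: "eventually (\<lambda>e. 0 < e \<and> e < y!q) (at_right 0)"
    using eventually_at_right_real[of 0 "y!q"] pos pq by (auto elim: eventually_mono)
  have prodz: "(\<Prod>i<l. y!i + e * v i) = (y!p + e) * (y!q - e) * (\<Prod>i\<in>{..<l} - {p} - {q}. y!i)"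
    if "q < l" for l e
  proof -
    have "(\<Prod>i<l. y!i + e * v i) = (y!p + e * v p) * (y!q + e * v q) * (\<Prod>i\<in>{..<l} - {p} - {q}. y!i + e * v i)"
      using prod_two_split[of p q l] pq that by simp
    moreover have "(\<Prod>i\<in>{..<l} - {p} - {q}. y!i + e * v i) = (\<Prod>i\<in>{..<l} - {p} - {q}. y!i)"
      by (intro prod.cong) (auto simp: v_def)
    ultimately show ?thesis using pq by (simp add: v_def)
  qed
  have prody: "(\<Prod>i<l. y!i) = y!p * y!q * (\<Prod>i\<in>{..<l} - {p} - {q}. y!i)" if "q < l" for l
    using prod_two_split[of p q l] pq that by simp
  have restpos: "(\<Prod>i\<in>{..<l} - {p} - {q}. y!i) > 0" if "l \<le> n" for l
    using pos that by (intro prod_pos) auto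
  have key: "(y!p + e) * (y!q - e) < y!p * y!q" if "0 < e" for e
  proof -
    have "(y!p + e) * (y!q - e) = y!p * y!q + e * (y!q - y!p) - e * e" by (simp add: algebra_simps)
    moreover have "e * (y!q - y!p) \<le> 0" using ypq that by (simp add: mult_nonneg_nonpos)
    moreover have "e * e > 0" using that by simp
    ultimately show ?thesis by linarith
  qed
  have cons: "\<forall>l. 1 \<le> l \<and> l \<le> n-1 \<longrightarrow>
       eventually (\<lambda>e. (\<Prod>i<l. y!i + e * v i) \<le> real g * (\<Sum>i\<in>{l..<n}. y!i + e * v i)) (at_right 0)"
  proof (intro allI impI)
    fix l assume l: "1 \<le> l \<and> l \<le> n - 1"
    have sv: "(\<Sum>i\<in>{l..<n}. y!i + e * v i) = (\<Sum>i\<in>{l..<n}. y!i) + e * (\<Sum>i\<in>{l..<n}. v i)" for e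
      by (simp add: sum.distrib sum_distrib_left)
    consider "l \<le> p" | "p < l \<and> l \<le> q" | "q < l" by linarith
    then show "eventually (\<lambda>e. (\<Prod>i<l. y!i + e * v i) \<le> real g * (\<Sum>i\<in>{l..<n}. y!i + e * v i)) (at_right 0)"
    proof cases
      case 1
      show ?thesis
      proof (rule exact_ev)
        show "(\<Prod>i<l. y!i) \<le> real g * (\<Sum>i\<in>{l..<n}. y!i)" using A_facts(5)[OF yA] l by simp
        show "\<forall>i<l. v i = 0" using 1 pq by (auto simp: v_def)
        show "(\<Sum>i\<in>{l..<n}. v i) = 0" using 1 pq unfolding v_def by (simp add: sum_subtractf)
      qed
    next
      case 2 then show ?thesis using sl slack_ev by blast
    next
      case 3
      have s0: "(\<Sum>i\<in>{l..<n}. v i) = 0" using 3 pq unfolding v_def by (simp add: sum_subtractf)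
      show ?thesis
      proof (rule eventually_mono[OF ev_small])
        fix e assume e: "0 < e \<and> e < y!q"
        have "(\<Prod>i<l. y!i + e * v i) = (y!p + e) * (y!q - e) * (\<Prod>i\<in>{..<l} - {p} - {q}. y!i)"
          using prodz 3 by blast
        also have "\<dots> \<le> y!p * y!q * (\<Prod>i\<in>{..<l} - {p} - {q}. y!i)"
          using key[of e] e restpos[of l] l by (intro mult_right_mono) (auto simp: less_imp_le)
        also have "\<dots> = (\<Prod>i<l. y!i)" using prody 3 by simp
        also have "\<dots> \<le> real g * (\<Sum>i\<in>{l..<n}. y!i)" using A_facts(5)[OF yA] l by simp
        finally show "(\<Prod>i<l. y!i + e * v i) \<le> real g * (\<Sum>i\<in>{l..<n}. y!i + e * v i)"
          using sv s0 by simp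
      qed
    qed
  qed
  have inA: "eventually (\<lambda>e. pert y v e \<in> A_set g n) (at_right 0)"
    by (rule pert_in_A[OF yA pos vs ord cons])
  have obj: "eventually (\<lambda>e. f_prod k (pert y v e) < f_prod k y) (at_right 0)"
  proof (rule eventually_mono[OF ev_small])
    fix e assume e: "0 < e \<and> e < y!q"
    have "f_prod k (pert y v e) = (\<Prod>i<k. y!i + e * v i)" using f_prod_pert len k by simp
    also have "\<dots> = (y!p + e) * (y!q - e) * (\<Prod>i\<in>{..<k} - {p} - {q}. y!i)" using prodz k by blast
    also have "\<dots> < y!p * y!q * (\<Prod>i\<in>{..<k} - {p} - {q}. y!i)"
      using key[of e] e restpos[of k] k by (intro mult_strict_right_mono) auto
    also have "\<dots> = f_prod k y" using prody k f_prod_nth len by simp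
    finally show "f_prod k (pert y v e) < f_prod k y" .
  qed
  show False using min_contra[OF mn eventually_conj[OF inA obj]] .
qed

lemma pertB:
  assumes yA: "y \<in> A_set g n" and g: "g \<ge> 1" and n: "n \<ge> 2"
    and last: "y!(n-1) < y!(n-2)"
    and k: "1 \<le> k" "k < n"
    and mn: "\<forall>x\<in>A_set g n. f_prod k y \<le> f_prod k x"
  shows False
proof -
  have pos: "\<forall>i<n. 0 < y!i" using A_pos yA g by auto
  have len: "length y = n" using A_facts(1)[OF yA] .
  have ex: "\<exists>i. Suc i < n \<and> y!(Suc i) < y!i"
    using last n by (intro exI[of _ "n-2"]) (auto simp: Suc_diff_Suc numeral_2_eq_2)
  obtain r where r: "Suc r < n" "y!(Suc r) < y!r" "\<forall>i<r. \<not> (Suc i < n \<and> y!(Suc i) < y!i)"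
    using ex exists_least_iff[of "\<lambda>i. Suc i < n \<and> y!(Suc i) < y!i"] by blast
  define v where "v = (\<lambda>i. (if i = n - 1 then real (Suc r) else 0) - (if i \<le> r then 1 else (0::real)))"
  have vs: "(\<Sum>i<n. v i) = 0"
    unfolding v_def using r n by (simp add: sum_subtractf sum_ind_le min_def)
  have vle: "v i \<le> 0" if "i < n - 1" for i using that by (simp add: v_def)
  have ord: "\<forall>i. Suc i < n \<longrightarrow> y!(Suc i) < y!i \<or> v (Suc i) \<le> v i"
  proof (intro allI impI)
    fix i assume i: "Suc i < n"
    show "y!(Suc i) < y!i \<or> v (Suc i) \<le> v i"
    proof (cases "Suc i = n - 1")
      case True
      then have "i = n - 2" by simp
      then show ?thesis using last True by simp
    next
      case False
      show ?thesis
      proof (cases "i = r")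
        case True then show ?thesis using r by simp
      next
        case False
        then show ?thesis using \<open>Suc i \<noteq> n - 1\<close> i unfolding v_def by auto
      qed
    qed
  qed
  have ev_nn: "eventually (\<lambda>e. 0 < e \<and> (\<forall>i\<in>{..<n}. 0 < y!i + e * v i)) (at_right 0)"
    using ev_epos eventually_ball_finite[of "{..<n}" "\<lambda>e i. 0 < y!i + e * v i" "at_right 0"] pos ev_pos_lin
    by (auto intro: eventually_conj)
  have cons: "\<forall>l. 1 \<le> l \<and> l \<le> n-1 \<longrightarrow>
       eventually (\<lambda>e. (\<Prod>i<l. y!i + e * v i) \<le> real g * (\<Sum>i\<in>{l..<n}. y!i + e * v i)) (at_right 0)"
  proof (intro allI impI)
    fix l assume l: "1 \<le> l \<and> l \<le> n - 1"
    show "eventually (\<lambda>e. (\<Prod>i<l. y!i + e * v i) \<le> real g * (\<Sum>i\<in>{l..<n}. y!i + e * v i)) (at_right 0)"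
    proof (rule eventually_mono[OF ev_nn])
      fix e assume e: "0 < e \<and> (\<forall>i\<in>{..<n}. 0 < y!i + e * v i)"
      have "(\<Prod>i<l. y!i + e * v i) \<le> (\<Prod>i<l. y!i)"
      proof (rule prod_mono)
        fix i assume "i \<in> {..<l}"
        then have "i < n - 1" "i < n" using l by auto
        then show "0 \<le> y!i + e * v i \<and> y!i + e * v i \<le> y!i"
          using e vle[of i] by (auto simp: mult_nonneg_nonpos less_imp_le)
      qed
      also have "\<dots> \<le> real g * (\<Sum>i\<in>{l..<n}. y!i)" using A_facts(5)[OF yA] l by simp
      also have "\<dots> \<le> real g * (\<Sum>i\<in>{l..<n}. y!i + e * v i)"
      proof -
        have "(\<Sum>i<l. v i) \<le> 0" using vle l by (intro sum_nonpos) auto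
        moreover have "(\<Sum>i<n. v i) = (\<Sum>i<l. v i) + (\<Sum>i\<in>{l..<n}. v i)" using l by (intro sum_split_lt) auto
        ultimately have "(\<Sum>i\<in>{l..<n}. v i) \<ge> 0" using vs by simp
        then have "(\<Sum>i\<in>{l..<n}. y!i) \<le> (\<Sum>i\<in>{l..<n}. y!i) + e * (\<Sum>i\<in>{l..<n}. v i)" using e by simp
        also have "\<dots> = (\<Sum>i\<in>{l..<n}. y!i + e * v i)" by (simp add: sum.distrib sum_distrib_left)
        finally show ?thesis using g by (intro mult_left_mono) auto
      qed
      finally show "(\<Prod>i<l. y!i + e * v i) \<le> real g * (\<Sum>i\<in>{l..<n}. y!i + e * v i)" .
    qed
  qed
  have inA: "eventually (\<lambda>e. pert y v e \<in> A_set g n) (at_right 0)"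
    by (rule pert_in_A[OF yA pos vs ord cons])
  have obj: "eventually (\<lambda>e. f_prod k (pert y v e) < f_prod k y) (at_right 0)"
  proof (rule eventually_mono[OF ev_nn])
    fix e assume e: "0 < e \<and> (\<forall>i\<in>{..<n}. 0 < y!i + e * v i)"
    have "f_prod k (pert y v e) = (\<Prod>i<k. y!i + e * v i)" using f_prod_pert len k by simp
    also have "\<dots> < (\<Prod>i<k. y!i)"
    proof (rule prod_strict_less[of _ 0])
      show "0 \<in> {..<k}" using k by simp
      show "\<forall>i\<in>{..<k}. 0 < y!i + e * v i \<and> y!i + e * v i \<le> y!i"
        using e vle k by (auto simp: mult_nonneg_nonpos)
      show "y!0 + e * v 0 < y!0" using e r n by (simp add: v_def)
    qed simp
    also have "\<dots> = f_prod k y" using f_prod_nth len k by simp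
    finally show "f_prod k (pert y v e) < f_prod k y" .
  qed
  show False using min_contra[OF mn eventually_conj[OF inA obj]] .
qed

lemma pertC:
  assumes yA: "y \<in> A_set g n" and g: "g \<ge> 1" and p: "Suc p < n"
    and op: "p = 0 \<or> y!p < y!(p-1)" and oq: "y!(Suc p) < y!p"
    and sl: "\<forall>l. p < l \<and> l \<le> n - 1 \<longrightarrow> (\<Prod>i<l. y!i) < real g * (\<Sum>i\<in>{l..<n}. y!i)"
    and k: "p < k" "k \<le> n"
    and mn: "\<forall>x\<in>A_set g n. f_prod k y \<le> f_prod k x"
  shows False
proof -
  have pos: "\<forall>i<n. 0 < y!i" using A_pos yA g by auto
  have len: "length y = n" using A_facts(1)[OF yA] .
  define v where "v = (\<lambda>i. (if i = p then real (n - Suc p) else 0) - (if p < i then 1 else (0::real)))"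
  define w where "w = (\<lambda>i. - v i)"
  have vs: "(\<Sum>i<n. v i) = 0"
    unfolding v_def using p by (simp add: sum_subtractf sum_ind_gt)
  have ws: "(\<Sum>i<n. w i) = 0" unfolding w_def using vs by (simp add: sum_negf)
  have vz: "\<forall>i<l. v i = 0" "\<forall>i<l. w i = 0" if "l \<le> p" for l using that by (auto simp: v_def w_def)
  have ord: "\<forall>i. Suc i < n \<longrightarrow> y!(Suc i) < y!i \<or> u (Suc i) \<le> u i" if "u = v \<or> u = w" for u
  proof (intro allI impI)
    fix i assume i: "Suc i < n"
    show "y!(Suc i) < y!i \<or> u (Suc i) \<le> u i"
    proof (cases "Suc i = p")
      case True then show ?thesis using op by auto
    next
      case False
      show ?thesis
      proof (cases "i = p")
        case True then show ?thesis using oq by simp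
      next
        case False
        then have "v (Suc i) = v i" using \<open>Suc i \<noteq> p\<close> unfolding v_def by auto
        then show ?thesis using that unfolding w_def by auto
      qed
    qed
  qed
  have cons: "\<forall>l. 1 \<le> l \<and> l \<le> n-1 \<longrightarrow>
       eventually (\<lambda>e. (\<Prod>i<l. y!i + e * u i) \<le> real g * (\<Sum>i\<in>{l..<n}. y!i + e * u i)) (at_right 0)"
    if u: "u = v \<or> u = w" for u
  proof (intro allI impI)
    fix l assume l: "1 \<le> l \<and> l \<le> n - 1"
    have us: "(\<Sum>i<n. u i) = 0" using u vs ws by auto
    show "eventually (\<lambda>e. (\<Prod>i<l. y!i + e * u i) \<le> real g * (\<Sum>i\<in>{l..<n}. y!i + e * u i)) (at_right 0)"
    proof (cases "l \<le> p")
      case True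
      have uz: "\<forall>i<l. u i = 0" using vz[OF True] u by auto
      show ?thesis
      proof (rule exact_ev)
        show "(\<Prod>i<l. y!i) \<le> real g * (\<Sum>i\<in>{l..<n}. y!i)" using A_facts(5)[OF yA] l by simp
        show "\<forall>i<l. u i = 0" by (rule uz)
        have "(\<Sum>i<n. u i) = (\<Sum>i<l. u i) + (\<Sum>i\<in>{l..<n}. u i)" using l by (intro sum_split_lt) auto
        then show "(\<Sum>i\<in>{l..<n}. u i) = 0" using us uz by simp
      qed
    next
      case False then show ?thesis using sl l slack_ev by auto
    qed
  qed
  have inA: "eventually (\<lambda>e. pert y u e \<in> A_set g n) (at_right 0)" if "u = v \<or> u = w" for u
  proof (rule pert_in_A[OF yA pos])
    show "(\<Sum>i<n. u i) = 0" using that vs ws by auto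
  qed (use ord[OF that] cons[OF that] in auto)
  have ev_nn: "eventually (\<lambda>e. 0 < e \<and> (\<forall>i\<in>{..<n}. 0 < y!i + e * v i) \<and> (\<forall>i\<in>{..<n}. 0 < y!i + e * w i)) (at_right 0)"
  proof -
    have "eventually (\<lambda>e. \<forall>i\<in>{..<n}. 0 < y!i + e * v i) (at_right 0)"
      by (rule eventually_ball_finite) (use pos ev_pos_lin in auto)
    moreover have "eventually (\<lambda>e. \<forall>i\<in>{..<n}. 0 < y!i + e * w i) (at_right 0)"
      by (rule eventually_ball_finite) (use pos ev_pos_lin in auto)
    ultimately show ?thesis using ev_epos by (auto intro: eventually_conj)
  qed
  obtain e where e: "pert y v e \<in> A_set g n" "pert y w e \<in> A_set g n" "0 < e"
      "\<forall>i\<in>{..<n}. 0 < y!i + e * v i" "\<forall>i\<in>{..<n}. 0 < y!i + e * w i"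
    using eventually_happens'[OF _ eventually_conj[OF inA[of v] eventually_conj[OF inA[of w] ev_nn]]] by auto
  have fv: "f_prod k (pert y v e) = (\<Prod>i<k. y!i + e * v i)" using f_prod_pert len k by simp
  have fw: "f_prod k (pert y w e) = (\<Prod>i<k. y!i + e * w i)" using f_prod_pert len k by simp
  have fy: "f_prod k y = (\<Prod>i<k. y!i)" using f_prod_nth len k by simp
  have "f_prod k (pert y v e) * f_prod k (pert y w e) = (\<Prod>i<k. (y!i + e * v i) * (y!i + e * w i))"
    using fv fw by (simp add: prod.distrib)
  also have "\<dots> < (\<Prod>i<k. y!i * y!i)"
  proof (rule prod_strict_less[of _ p])
    show "p \<in> {..<k}" using k by simp
    show "\<forall>i\<in>{..<k}. 0 < (y!i + e * v i) * (y!i + e * w i) \<and> (y!i + e * v i) * (y!i + e * w i) \<le> y!i * y!i"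
    proof
      fix i assume "i \<in> {..<k}"
      then have "i < n" using k by auto
      then have a: "0 < y!i + e * v i" "0 < y!i + e * w i" using e by auto
      have b: "(y!i + e * v i) * (y!i + e * w i) = y!i * y!i - (e * v i) * (e * v i)"
        by (simp add: w_def algebra_simps)
      have c: "(e * v i) * (e * v i) \<ge> 0" by simp
      show "0 < (y!i + e * v i) * (y!i + e * w i) \<and> (y!i + e * v i) * (y!i + e * w i) \<le> y!i * y!i"
        using mult_pos_pos[OF a] b c by linarith
    qed
    have "v p \<noteq> 0" using p by (simp add: v_def)
    then have "e * v p \<noteq> 0" using e by simp
    then have "(e * v p) * (e * v p) > 0" using not_real_square_gt_zero by blast
    moreover have "(y!p + e * v p) * (y!p + e * w p) = y!p * y!p - (e * v p) * (e * v p)"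
      by (simp add: w_def algebra_simps)
    ultimately show "(y!p + e * v p) * (y!p + e * w p) < y!p * y!p" by simp
  qed simp
  also have "\<dots> = f_prod k y * f_prod k y" using fy by (simp add: prod.distrib)
  finally have lt: "f_prod k (pert y v e) * f_prod k (pert y w e) < f_prod k y * f_prod k y" .
  have "f_prod k y \<le> f_prod k (pert y v e)" "f_prod k y \<le> f_prod k (pert y w e)" using mn e by auto
  moreover have "0 \<le> f_prod k y" unfolding fy
    by (rule prod_nonneg) (use pos k in \<open>auto intro: less_imp_le\<close>)
  ultimately have "f_prod k y * f_prod k y \<le> f_prod k (pert y v e) * f_prod k (pert y w e)"
    by (intro mult_mono) auto
  then show False using lt by simp
qed



lemma minimizer_structure:
  assumes g: "g \<ge> 1" and n: "n \<ge> 3" and k: "1 \<le> k" "k \<le> n" "n \<le> k + 2"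
    and yA: "y \<in> A_set g n" and mn: "\<forall>x\<in>A_set g n. f_prod k y \<le> f_prod k x"
  shows "(\<exists>J. 1 \<le> J \<and> J \<le> k \<and> (k = n \<longrightarrow> J = n) \<and> y = ypt g n J) \<or> (k < n \<and> (\<forall>l. 1 \<le> l \<and> l \<le> k \<longrightarrow> tight y g n l))"
proof (cases "\<exists>l. 1 \<le> l \<and> l \<le> k \<and> l \<le> n - 1 \<and> \<not> tight y g n l")
  case False
  show ?thesis
  proof (cases "k = n")
    case True
    have t: "\<forall>l. 1 \<le> l \<and> l < n \<longrightarrow> tight y g n l" using False True by auto
    have tl: "\<forall>i. n - 1 \<le> i \<and> i < n \<longrightarrow> y!i = y!(n-1)"
    proof (intro allI impI)
      fix i assume "n - 1 \<le> i \<and> i < n"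
      then have "i = n - 1" by linarith
      then show "y!i = y!(n-1)" by simp
    qed
    have n1: "1 \<le> n" using n by simp
    have "y = ypt g n n"
      using struct_to_ypt[OF yA g n1 order.refl t tl] .
    then have "1 \<le> n \<and> n \<le> k \<and> y = ypt g n n" using True n1 by simp
    then show ?thesis by blast
  next
    case False
    then show ?thesis using \<open>\<not> (\<exists>l. _)\<close> k by auto
  qed
next
  case True
  have slk: "(\<Prod>i<l. y!i) < real g * (\<Sum>i\<in>{l..<n}. y!i)" if "1 \<le> l" "l \<le> n - 1" "\<not> tight y g n l" for l
    using A_facts(5)[OF yA that(1,2)] that(3) unfolding tight_def by linarith
  obtain j where j: "1 \<le> j \<and> j \<le> k \<and> j \<le> n - 1 \<and> \<not> tight y g n j"
     and jmin: "\<forall>l<j. \<not> (1 \<le> l \<and> l \<le> k \<and> l \<le> n - 1 \<and> \<not> tight y g n l)"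
    using True exists_least_iff[of "\<lambda>l. 1 \<le> l \<and> l \<le> k \<and> l \<le> n - 1 \<and> \<not> tight y g n l"] by blast
  have tpre: "\<forall>l. 1 \<le> l \<and> l < j \<longrightarrow> tight y g n l" using jmin j by auto
  have op: "j - 1 = 0 \<or> y!(j-1) < y!(j-1-1)"
  proof (cases "j = 1")
    case False
    then have "tight y g n (j-1)" using tpre j by auto
    then have "y!(j-1) < y!(j-1-1)" using tight_strict[OF yA g n, of "j-1"] j False by auto
    then show ?thesis by simp
  qed simp
  have step1: "\<forall>l. j < l \<and> l \<le> k \<and> l \<le> n - 1 \<longrightarrow> \<not> tight y g n l"
  proof (rule ccontr)
    assume "\<not> ?thesis"
    then have ex: "\<exists>l. j < l \<and> l \<le> k \<and> l \<le> n - 1 \<and> tight y g n l" by blast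
    obtain ls where ls: "j < ls \<and> ls \<le> k \<and> ls \<le> n - 1 \<and> tight y g n ls"
      and lsmin: "\<forall>l<ls. \<not> (j < l \<and> l \<le> k \<and> l \<le> n - 1 \<and> tight y g n l)"
      using ex exists_least_iff[of "\<lambda>l. j < l \<and> l \<le> k \<and> l \<le> n - 1 \<and> tight y g n l"] by blast
    have oq: "Suc (ls - 1) = n \<or> y!(Suc (ls - 1)) < y!(ls - 1)"
      using tight_strict[OF yA g n, of ls] ls j by auto
    show False
    proof (rule pertA[OF yA g _ _ op oq _ _ _ mn])
      show "j - 1 < ls - 1" "ls - 1 < n" using ls j by auto
      show "ls - 1 < k" "k \<le> n" using ls j k by auto
      show "\<forall>l. j - 1 < l \<and> l \<le> ls - 1 \<longrightarrow> (\<Prod>i<l. y!i) < real g * (\<Sum>i\<in>{l..<n}. y!i)"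
      proof (intro allI impI)
        fix l assume l: "j - 1 < l \<and> l \<le> ls - 1"
        then have "\<not> tight y g n l"
          using lsmin j ls by (cases "l = j") auto
        then show "(\<Prod>i<l. y!i) < real g * (\<Sum>i\<in>{l..<n}. y!i)" using slk l ls j by auto
      qed
    qed
  qed
  have slack1: "(\<Prod>i<l. y!i) < real g * (\<Sum>i\<in>{l..<n}. y!i)" if "j \<le> l" "l \<le> k" "l \<le> n - 1" for l
  proof -
    have "\<not> tight y g n l" using step1 j that by (cases "l = j") auto
    then show ?thesis using slk that j by auto
  qed
  have kn: "k < n"
  proof (rule ccontr)
    assume "\<not> k < n"
    then have kn: "k = n" using k by simp
    show False
    proof (rule pertA[OF yA g _ _ op _ _ _ _ mn])
      show "j - 1 < n - 1" "n - 1 < n" using j n by auto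
      show "Suc (n - 1) = n \<or> y!(Suc (n - 1)) < y!(n - 1)" using n by auto
      show "n - 1 < k" "k \<le> n" using kn n by auto
      show "\<forall>l. j - 1 < l \<and> l \<le> n - 1 \<longrightarrow> (\<Prod>i<l. y!i) < real g * (\<Sum>i\<in>{l..<n}. y!i)"
        using slack1 kn by auto
    qed
  qed
  have step2: "y!(Suc q) = y!q" if q: "j \<le> q" "q < k" for q
  proof (rule ccontr)
    assume ne: "y!(Suc q) \<noteq> y!q"
    have "y!(Suc q) \<le> y!q" using A_facts(2)[OF yA, of q "Suc q"] q kn by auto
    then have lt: "y!(Suc q) < y!q" using ne by simp
    show False
    proof (rule pertA[OF yA g _ _ op _ _ _ _ mn])
      show "j - 1 < q" "q < n" using q j kn by auto
      show "Suc q = n \<or> y!(Suc q) < y!q" using lt by simp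
      show "q < k" "k \<le> n" using q k by auto
      show "\<forall>l. j - 1 < l \<and> l \<le> q \<longrightarrow> (\<Prod>i<l. y!i) < real g * (\<Sum>i\<in>{l..<n}. y!i)"
        using slack1 q kn by auto
    qed
  qed
  have step3: "y!(n-1) = y!(n-2)"
  proof (rule ccontr)
    assume ne: "y!(n-1) \<noteq> y!(n-2)"
    have "y!(n-1) \<le> y!(n-2)" using A_facts(2)[OF yA, of "n-2" "n-1"] n by auto
    then have "y!(n-1) < y!(n-2)" using ne by simp
    then show False using pertB[OF yA g _ _ k(1) kn mn] n by auto
  qed
  have blk: "y!i = y!j" if "j \<le> i" "i \<le> k" for i
    using that
  proof (induction i)
    case 0 then show ?case by simp
  next
    case (Suc i)
    show ?case
    proof (cases "Suc i = j")
      case True then show ?thesis by simp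
    next
      case False
      then have "y!i = y!j" using Suc by auto
      moreover have "y!(Suc i) = y!i" using step2[of i] Suc False by auto
      ultimately show ?thesis by simp
    qed
  qed
  have tail: "y!i = y!j" if "j \<le> i" "i < n" for i
  proof (cases "i \<le> k")
    case True show ?thesis by (rule blk[OF that(1) True])
  next
    case False
    then have "i = n - 1" "k = n - 2" using that k kn by auto
    then show ?thesis using step3 blk[of "n-2"] j by simp
  qed
  have slack2: "(\<Prod>i<l. y!i) < real g * (\<Sum>i\<in>{l..<n}. y!i)" if "j \<le> l" "l \<le> n - 1" for l
  proof (cases "l \<le> k")
    case True then show ?thesis using slack1 that by simp
  next
    case False
    then have l: "l = n - 1" using that k kn by auto
    have "\<not> tight y g n l"
    proof
      assume "tight y g n l"
      then have "y!l < y!(l-1)" using tight_strict[OF yA g n, of l] l n by auto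
      moreover have "y!l = y!(l-1)"
      proof -
        have a: "j \<le> l - 1" "l - 1 < n" "j \<le> l" "l < n" using j False l kn by auto
        show ?thesis using tail[OF a(3,4)] tail[OF a(1,2)] by simp
      qed
      ultimately show False by simp
    qed
    then show ?thesis using slk that j by auto
  qed
  have step6: "y!j = y!(j-1)"
  proof (rule ccontr)
    assume ne: "y!j \<noteq> y!(j-1)"
    have "y!j \<le> y!(j-1)" using A_facts(2)[OF yA, of "j-1" j] j by auto
    then have lt: "y!(Suc (j-1)) < y!(j-1)" using ne j by simp
    show False
    proof (rule pertC[OF yA g _ op lt _ _ _ mn])
      show "Suc (j - 1) < n" using j n by auto
      show "j - 1 < k" "k \<le> n" using j k by auto
      show "\<forall>l. j - 1 < l \<and> l \<le> n - 1 \<longrightarrow> (\<Prod>i<l. y!i) < real g * (\<Sum>i\<in>{l..<n}. y!i)"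
        using slack2 by auto
    qed
  qed
  have tail2: "\<forall>i. j - 1 \<le> i \<and> i < n \<longrightarrow> y!i = y!(j-1)"
  proof (intro allI impI)
    fix i assume i: "j - 1 \<le> i \<and> i < n"
    show "y!i = y!(j-1)"
    proof (cases "i = j - 1")
      case False then show ?thesis using tail[of i] step6 i by auto
    qed simp
  qed
  have "y = ypt g n j" by (rule struct_to_ypt[OF yA g _ _ tpre tail2]) (use j in auto)
  then show ?thesis using j kn by auto
qed



lemma pow_T: fixes T :: real assumes "T \<ge> 1" "p \<ge> 2" shows "(T + 1)^p \<ge> 2^p * T"
  using assms(2)
proof (induction p rule: dec_induct)
  case base
  have "(T + 1)^2 - 4 * T = (T - 1)^2" by (simp add: power2_eq_square algebra_simps)
  then show ?case by simp (smt (verit) zero_le_power2)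
next
  case (step p)
  have "2^(Suc p) * T = 2 * (2^p * T)" by simp
  also have "\<dots> \<le> (T + 1) * (T + 1)^p" using step assms(1) by (intro mult_mono) auto
  finally show ?case by simp
qed

lemma threehalf: "p \<ge> 3 \<Longrightarrow> (3/2::real)^p > real p"
proof (induction p rule: dec_induct)
  case base then show ?case by (simp add: numeral_3_eq_3)
next
  case (step p)
  then have "(3/2::real)^(Suc p) > 3/2 * real p" by simp
  moreover have "3/2 * real p \<ge> real (Suc p)" using step by simp
  ultimately show ?case by linarith
qed

lemma eightfifth: "q \<ge> 3 \<Longrightarrow> (8/5::real)^q > real q + 1"
proof (induction q rule: dec_induct)
  case base then show ?case by (simp add: numeral_3_eq_3)
next
  case (step q)
  then have "(8/5::real)^(Suc q) > 8/5 * (real q + 1)" by simp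
  moreover have "8/5 * (real q + 1) \<ge> real (Suc q) + 1" using step by simp
  ultimately show ?case by linarith
qed

lemma ineq_I2:
  fixes T :: real assumes T: "T \<ge> 1" and p: "p \<ge> 3"
  shows "(real p + 1)^p * T < (real p)^(p-1) * (T + 1)^p"
proof -
  have a: "(real p)^(p-1) * (T + 1)^p \<ge> (real p)^(p-1) * (2^p * T)"
    using pow_T[OF T, of p] p by (intro mult_left_mono) auto
  have "(2 * real p)^p \<ge> (3/2 * (real p + 1))^p" using p by (intro power_mono) auto
  also have "(3/2 * (real p + 1))^p = (3/2)^p * (real p + 1)^p" by (rule power_mult_distrib)
  finally have b: "(2 * real p)^p \<ge> (3/2)^p * (real p + 1)^p" .
  have c: "(3/2)^p * (real p + 1)^p > real p * (real p + 1)^p"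
    using threehalf[OF p] by (intro mult_strict_right_mono) auto
  have d: "(2 * real p)^p = real p * (2^p * (real p)^(p-1))"
  proof -
    have "(2 * real p)^p = 2^p * (real p)^p" by (simp add: power_mult_distrib)
    also have "(real p)^p = real p * (real p)^(p-1)" using p by (metis power_eq_if not_numeral_le_zero le_zero_eq)
    finally show ?thesis by simp
  qed
  have "real p * (real p + 1)^p < real p * (2^p * (real p)^(p-1))" using b c d by linarith
  then have e: "(real p + 1)^p < 2^p * (real p)^(p-1)" using p by simp
  have "(real p + 1)^p * T < 2^p * (real p)^(p-1) * T" using e T by (intro mult_strict_right_mono) auto
  also have "\<dots> \<le> (real p)^(p-1) * (T + 1)^p" using a by (simp add: algebra_simps)
  finally show ?thesis .
qed

lemma ineq_I4:
  fixes T :: real assumes T: "T \<ge> 1" and q: "q \<ge> 3"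
  shows "(real q + 2)^q * T < (real q + 1)^(q-1) * (T + 1)^q"
proof -
  have a: "(real q + 1)^(q-1) * (T + 1)^q \<ge> (real q + 1)^(q-1) * (2^q * T)"
    using pow_T[OF T, of q] q by (intro mult_left_mono) auto
  have "(2 * (real q + 1))^q \<ge> (8/5 * (real q + 2))^q" using q by (intro power_mono) auto
  also have "(8/5 * (real q + 2))^q = (8/5)^q * (real q + 2)^q" by (rule power_mult_distrib)
  finally have b: "(2 * (real q + 1))^q \<ge> (8/5)^q * (real q + 2)^q" .
  have c: "(8/5)^q * (real q + 2)^q > (real q + 1) * (real q + 2)^q"
    using eightfifth[OF q] by (intro mult_strict_right_mono) auto
  have d: "(2 * (real q + 1))^q = (real q + 1) * (2^q * (real q + 1)^(q-1))"
  proof -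
    have "(2 * (real q + 1))^q = 2^q * (real q + 1)^q" by (rule power_mult_distrib)
    also have "(real q + 1)^q = (real q + 1) * (real q + 1)^(q-1)" using q
      by (metis Suc_pred' not_numeral_le_zero not_gr0 le_zero_eq power_Suc)
    finally show ?thesis by simp
  qed
  have "(real q + 1) * (real q + 2)^q < (real q + 1) * (2^q * (real q + 1)^(q-1))" using b c d by linarith
  then have e: "(real q + 2)^q < 2^q * (real q + 1)^(q-1)" by (smt (verit) mult_le_cancel_left_pos of_nat_0_le_iff)
  have "(real q + 2)^q * T < 2^q * (real q + 1)^(q-1) * T" using e T by (intro mult_strict_right_mono) auto
  also have "\<dots> \<le> (real q + 1)^(q-1) * (T + 1)^q" using a by (simp add: algebra_simps)
  finally show ?thesis .
qed

definition Dn :: "nat \<Rightarrow> nat \<Rightarrow> nat \<Rightarrow> nat \<Rightarrow> real" where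
  "Dn g n k J = real (tsylv g J) * (real (n - J + 1) * real (tsylv g J))^(k - J + 1)"

lemma Dn_pos: "g \<ge> 1 \<Longrightarrow> 1 \<le> J \<Longrightarrow> Dn g n k J > 0"
  unfolding Dn_def using tsylv_pos[of g J] by simp

lemma fprod_Dn:
  assumes "g \<ge> 1" "1 \<le> J" "J \<le> k" "k \<le> n"
  shows "f_prod k (ypt g n J) = real g / Dn g n k J"
  unfolding f_prod_ypt[OF assms] Dn_def by (simp add: power_one_over)

lemma Dn_step:
  assumes g: "g \<ge> 1" and J: "1 \<le> J" "J + 1 \<le> k" "k \<le> n"
  shows "Dn g n k J = (real (n - J + 1)^(k - J + 1) * real (tsylv g J)) * real (tsylv g J)^(k - J + 1)"
    "Dn g n k (J + 1) = ((real (n - J + 1) - 1)^(k - J) * (real (tsylv g J) + 1)^(k - J + 1)) * real (tsylv g J)^(k - J + 1)"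
proof -
  define T where "T = real (tsylv g J)"
  define mm where "mm = real (n - J + 1)"
  obtain J' where J': "J = Suc J'" using J by (cases J) auto
  have "k - J \<ge> 1" using J by simp
  then obtain e where e: "k - J = Suc e" by (cases "k - J") auto
  have T1: "real (tsylv g (J + 1)) = T * (T + 1)" unfolding T_def using tsylv_SS[of g J'] J' by simp
  have m1: "real (n - (J + 1) + 1) = mm - 1" unfolding mm_def using J by (simp add: of_nat_diff)
  have e1: "k - (J + 1) + 1 = k - J" using J by simp
  show "Dn g n k J = (real (n - J + 1)^(k - J + 1) * real (tsylv g J)) * real (tsylv g J)^(k - J + 1)"
    unfolding Dn_def by (simp only: power_mult_distrib mult_ac)
  have "Dn g n k (J + 1) = T * (T + 1) * ((mm - 1) * (T * (T + 1)))^(k - J)"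
    unfolding Dn_def T1 m1 e1 by simp
  also have "\<dots> = ((mm - 1)^(k - J) * (T + 1)^(k - J + 1)) * T^(k - J + 1)"
  proof -
    have "T * (T + 1) * ((mm - 1) * (T * (T + 1)))^(Suc e) = (mm - 1)^(Suc e) * ((T + 1) * (T + 1)^(Suc e)) * (T * T^(Suc e))"
      by (simp only: power_mult_distrib mult_ac)
    then show ?thesis unfolding e by simp
  qed
  finally show "Dn g n k (J + 1) = ((real (n - J + 1) - 1)^(k - J) * (real (tsylv g J) + 1)^(k - J + 1)) * real (tsylv g J)^(k - J + 1)"
    unfolding T_def mm_def .
qed

lemma Dn_cmp:
  assumes g: "g \<ge> 1" and J: "1 \<le> J" "J + 1 \<le> k" "k \<le> n"
  shows "Dn g n k J < Dn g n k (J + 1) \<longleftrightarrow>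
           real (n - J + 1)^(k - J + 1) * real (tsylv g J) < (real (n - J + 1) - 1)^(k - J) * (real (tsylv g J) + 1)^(k - J + 1)"
    and "Dn g n k J = Dn g n k (J + 1) \<longleftrightarrow>
           real (n - J + 1)^(k - J + 1) * real (tsylv g J) = (real (n - J + 1) - 1)^(k - J) * (real (tsylv g J) + 1)^(k - J + 1)"
proof -
  have p: "real (tsylv g J)^(k - J + 1) > 0" using tsylv_pos[OF g J(1)] by simp
  show "Dn g n k J < Dn g n k (J + 1) \<longleftrightarrow>
           real (n - J + 1)^(k - J + 1) * real (tsylv g J) < (real (n - J + 1) - 1)^(k - J) * (real (tsylv g J) + 1)^(k - J + 1)"
    unfolding Dn_step[OF assms] by (rule mult_less_cancel_right_pos[OF p])
  show "Dn g n k J = Dn g n k (J + 1) \<longleftrightarrow>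
           real (n - J + 1)^(k - J + 1) * real (tsylv g J) = (real (n - J + 1) - 1)^(k - J) * (real (tsylv g J) + 1)^(k - J + 1)"
  proof -
    have "real (tsylv g J)^(k - J + 1) \<noteq> 0" using p by (metis less_irrefl)
    then show ?thesis unfolding Dn_step[OF assms] by (simp only: mult_cancel_right simp_thms)
  qed
qed

lemma chain_mono:
  assumes "\<forall>J. 1 \<le> J \<and> J < M \<longrightarrow> D J < (D (Suc J) :: real)" "1 \<le> J" "J < M"
  shows "D J < D M"
  using assms(3,1)
proof (induction M)
  case 0 then show ?case by simp
next
  case (Suc M)
  show ?case
  proof (cases "J = M")
    case True then show ?thesis using Suc.prems assms(2) by auto
  next
    case False
    then have "D J < D M" using Suc by auto
    also have "D M < D (Suc M)" using Suc.prems assms(2) False by auto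
    finally show ?thesis .
  qed
qed



lemma chainA_strict:
  assumes g: "g \<ge> 1" and J: "1 \<le> J" "J + 2 < n"
  shows "Dn g n (n-1) J < Dn g n (n-1) (J+1)"
proof -
  define p where "p = n - J"
  have p3: "p \<ge> 3" using J p_def by simp
  have preA: "J + 1 \<le> n - 1" "n - 1 \<le> n" using J by auto
  have e1: "n - 1 - J + 1 = p" "n - 1 - J = p - 1" using J p_def by auto
  have m: "real (n - J + 1) = real p + 1" using J p_def by simp
  have T: "real (tsylv g J) \<ge> 1" using tsylv_ge1 g J by simp
  have pp: "p - 1 + 1 = p" using p3 by simp
  have c: "Dn g n (n-1) J < Dn g n (n-1) (J+1) \<longleftrightarrow> (real p + 1)^p * real (tsylv g J) < (real p + 1 - 1)^(p-1) * (real (tsylv g J) + 1)^p"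
    using Dn_cmp(1)[OF g J(1) preA] unfolding e1 m pp .
  have d: "real p + 1 - 1 = real p" by simp
  show ?thesis using c ineq_I2[OF T p3] unfolding d by blast
qed

lemma chainA_last:
  assumes g: "g \<ge> 1" and J: "1 \<le> J" "J + 2 = n"
  shows "tsylv g J \<ge> 3 \<Longrightarrow> Dn g n (n-1) J < Dn g n (n-1) (J+1)"
    "tsylv g J = 2 \<Longrightarrow> Dn g n (n-1) J = Dn g n (n-1) (J+1)"
    "tsylv g J = 1 \<Longrightarrow> Dn g n (n-1) (J+1) < Dn g n (n-1) J"
proof -
  have preA: "J + 1 \<le> n - 1" "n - 1 \<le> n" using J by auto
  have e1: "n - 1 - J + 1 = 2" "n - 1 - J = 1" using J by auto
  have m: "real (n - J + 1) = 3" using J by simp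
  have c1: "Dn g n (n-1) J < Dn g n (n-1) (J+1) \<longleftrightarrow> 9 * real (tsylv g J) < 2 * (real (tsylv g J) + 1)^2"
    using Dn_cmp(1)[OF g J(1) preA] J unfolding e1 m by (simp add: power2_eq_square)
  have c2: "Dn g n (n-1) J = Dn g n (n-1) (J+1) \<longleftrightarrow> 9 * real (tsylv g J) = 2 * (real (tsylv g J) + 1)^2"
    using Dn_cmp(2)[OF g J(1) preA] J unfolding e1 m by (simp add: power2_eq_square)
  show "tsylv g J \<ge> 3 \<Longrightarrow> Dn g n (n-1) J < Dn g n (n-1) (J+1)"
  proof -
    assume a: "tsylv g J \<ge> 3"
    then have t: "real (tsylv g J) \<ge> 3" by simp
    have "(2 * real (tsylv g J) - 1) * (real (tsylv g J) - 2) > 0" using t by (intro mult_pos_pos) auto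
    then have "9 * real (tsylv g J) < 2 * (real (tsylv g J) + 1)^2"
      by (simp add: power2_eq_square algebra_simps)
    then show ?thesis using c1 by simp
  qed
  show "tsylv g J = 2 \<Longrightarrow> Dn g n (n-1) J = Dn g n (n-1) (J+1)" using c2 by simp
  show "tsylv g J = 1 \<Longrightarrow> Dn g n (n-1) (J+1) < Dn g n (n-1) J"
  proof -
    assume a: "tsylv g J = 1"
    then have "\<not> Dn g n (n-1) J < Dn g n (n-1) (J+1)" "Dn g n (n-1) J \<noteq> Dn g n (n-1) (J+1)"
      using c1 c2 by simp_all
    then show ?thesis by simp
  qed
qed

lemma chainB_strict:
  assumes g: "g \<ge> 1" and J: "1 \<le> J" "J + 3 < n"
  shows "Dn g n (n-2) J < Dn g n (n-2) (J+1)"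
proof -
  define q where "q = n - J - 1"
  have q3: "q \<ge> 3" using J q_def by simp
  have preB: "J + 1 \<le> n - 2" "n - 2 \<le> n" using J by auto
  have e1: "n - 2 - J + 1 = q" "n - 2 - J = q - 1" using J q_def by auto
  have m: "real (n - J + 1) = real q + 2" using J q_def by simp
  have T: "real (tsylv g J) \<ge> 1" using tsylv_ge1 g J by simp
  have mm: "real q + 2 - 1 = real q + 1" by simp
  have pp: "q - 1 + 1 = q" using q3 by simp
  have c: "Dn g n (n-2) J < Dn g n (n-2) (J+1) \<longleftrightarrow> (real q + 2)^q * real (tsylv g J) < (real q + 2 - 1)^(q-1) * (real (tsylv g J) + 1)^q"
    using Dn_cmp(1)[OF g J(1) preB] unfolding e1 m pp .
  show ?thesis using c ineq_I4[OF T q3] unfolding mm by blast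
qed

lemma chainB_last:
  assumes g: "g \<ge> 1" and J: "1 \<le> J" "J + 3 = n"
  shows "tsylv g J \<ge> 4 \<Longrightarrow> Dn g n (n-2) J < Dn g n (n-2) (J+1)"
    "tsylv g J = 3 \<Longrightarrow> Dn g n (n-2) J = Dn g n (n-2) (J+1)"
    "tsylv g J \<le> 2 \<Longrightarrow> Dn g n (n-2) (J+1) < Dn g n (n-2) J"
proof -
  have preB: "J + 1 \<le> n - 2" "n - 2 \<le> n" using J by auto
  have e1: "n - 2 - J + 1 = 2" "n - 2 - J = 1" using J by auto
  have m: "real (n - J + 1) = 4" using J by simp
  have c1: "Dn g n (n-2) J < Dn g n (n-2) (J+1) \<longleftrightarrow> 16 * real (tsylv g J) < 3 * (real (tsylv g J) + 1)^2"
    using Dn_cmp(1)[OF g J(1) preB] J unfolding e1 m by (simp add: power2_eq_square)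
  have c2: "Dn g n (n-2) J = Dn g n (n-2) (J+1) \<longleftrightarrow> 16 * real (tsylv g J) = 3 * (real (tsylv g J) + 1)^2"
    using Dn_cmp(2)[OF g J(1) preB] J unfolding e1 m by (simp add: power2_eq_square)
  show "tsylv g J \<ge> 4 \<Longrightarrow> Dn g n (n-2) J < Dn g n (n-2) (J+1)"
  proof -
    assume a: "tsylv g J \<ge> 4"
    then have t: "real (tsylv g J) \<ge> 4" by simp
    have "(3 * real (tsylv g J) - 1) * (real (tsylv g J) - 3) > 0" using t by (intro mult_pos_pos) auto
    then have "16 * real (tsylv g J) < 3 * (real (tsylv g J) + 1)^2"
      by (simp add: power2_eq_square algebra_simps)
    then show ?thesis using c1 by simp
  qed
  show "tsylv g J = 3 \<Longrightarrow> Dn g n (n-2) J = Dn g n (n-2) (J+1)" using c2 by simp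
  show "tsylv g J \<le> 2 \<Longrightarrow> Dn g n (n-2) (J+1) < Dn g n (n-2) J"
  proof -
    assume a: "tsylv g J \<le> 2"
    have "tsylv g J \<ge> 1" using tsylv_ge1[OF g J(1)] by simp
    then have "tsylv g J = 1 \<or> tsylv g J = 2" using a by linarith
    then have "\<not> Dn g n (n-2) J < Dn g n (n-2) (J+1)" "Dn g n (n-2) J \<noteq> Dn g n (n-2) (J+1)"
      using c1 c2 by (auto simp: power2_eq_square)
    then show ?thesis by simp
  qed
qed



lemma tsylv_eq1: "g \<ge> 1 \<Longrightarrow> i \<ge> 1 \<Longrightarrow> tsylv g i = 1 \<Longrightarrow> i = 1 \<and> g = 1"
proof -
  assume a: "g \<ge> 1" "i \<ge> 1" "tsylv g i = 1"
  show ?thesis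
  proof (cases "i \<ge> 2")
    case True then show ?thesis using tsylv_ge2[OF a(1) True] a by simp
  next
    case False then have "i = 1" using a by simp
    then show ?thesis using a tsylv_1 by simp
  qed
qed

lemma tsylv_eq2: "g \<ge> 1 \<Longrightarrow> i \<ge> 1 \<Longrightarrow> tsylv g i = 2 \<Longrightarrow> (i = 1 \<and> g = 2) \<or> (i = 2 \<and> g = 1)"
proof -
  assume a: "g \<ge> 1" "i \<ge> 1" "tsylv g i = 2"
  consider "i = 1" | "i = 2" | "i \<ge> 3" using a by linarith
  then show ?thesis
  proof cases
    case 1 then show ?thesis using a tsylv_1 by simp
  next
    case 2
    then have e: "real g * (real g + 1) = 2" using tsylv_2[of g] a by simp
    have "g = 1"
    proof (rule ccontr)
      assume "g \<noteq> 1" then have "real g \<ge> 2" using a by simp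
      then have "real g * (real g + 1) \<ge> 2 * 3" by (intro mult_mono) auto
      then show False using e by simp
    qed
    then show ?thesis using 2 by simp
  next
    case 3 then show ?thesis using tsylv_ge6[OF a(1) 3] a by simp
  qed
qed

lemma tsylv_eq3: "g \<ge> 1 \<Longrightarrow> i \<ge> 1 \<Longrightarrow> tsylv g i = 3 \<Longrightarrow> i = 1 \<and> g = 3"
proof -
  assume a: "g \<ge> 1" "i \<ge> 1" "tsylv g i = 3"
  consider "i = 1" | "i = 2" | "i \<ge> 3" using a by linarith
  then show ?thesis
  proof cases
    case 1 then show ?thesis using a tsylv_1 by simp
  next
    case 2
    then have e: "real g * (real g + 1) = 3" using tsylv_2[of g] a by simp
    show ?thesis
    proof (cases "g = 1")
      case True then show ?thesis using e by simp
    next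
      case False then have "real g \<ge> 2" using a by simp
      then have "real g * (real g + 1) \<ge> 2 * 3" by (intro mult_mono) auto
      then show ?thesis using e by simp
    qed
  next
    case 3 then show ?thesis using tsylv_ge6[OF a(1) 3] a by simp
  qed
qed

lemma Dn_le_of_min:
  assumes g: "g \<ge> 1" and y: "y = ypt g n J0" and J0: "1 \<le> J0" "J0 \<le> k" and J: "1 \<le> J" "J \<le> k" and k: "k \<le> n"
    and mn: "\<forall>x\<in>A_set g n. f_prod k y \<le> f_prod k x"
  shows "Dn g n k J \<le> Dn g n k J0"
proof -
  have "ypt g n J \<in> A_set g n" using ypt_in_A g J k by simp
  then have "f_prod k y \<le> f_prod k (ypt g n J)" using mn by auto
  then have le: "real g / Dn g n k J0 \<le> real g / Dn g n k J"
    using fprod_Dn[OF g J0 k] fprod_Dn[OF g J k] y by simp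
  have p: "Dn g n k J0 > 0" "Dn g n k J > 0" "real g > 0" using Dn_pos g J J0 by auto
  show ?thesis
  proof (rule ccontr)
    assume "\<not> ?thesis"
    then have "Dn g n k J0 < Dn g n k J" by simp
    then have "real g / Dn g n k J < real g / Dn g n k J0" using p by (intro divide_strict_left_mono) auto
    then show False using le by simp
  qed
qed

lemma Dn_diag: "Dn g n k k = real (tsylv g k) * (real (n - k + 1) * real (tsylv g k))"
  unfolding Dn_def by simp



lemma case_kn:
  assumes g: "g \<ge> 1" and n: "n \<ge> 3" and yA: "y \<in> A_set g n"
    and mn: "\<forall>x\<in>A_set g n. f_prod n y \<le> f_prod n x"
  shows "f_prod n y = real g / (real (tsylv g n))^2 \<and> y = ypt g n n"
proof -
  have "(\<exists>J. 1 \<le> J \<and> J \<le> n \<and> (n = n \<longrightarrow> J = n) \<and> y = ypt g n J) \<or> (n < n \<and> (\<forall>l. 1 \<le> l \<and> l \<le> n \<longrightarrow> tight y g n l))"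
    by (rule minimizer_structure[OF g n _ order.refl _ yA mn]) (use n in auto)
  then have y: "y = ypt g n n" by auto
  have "f_prod n y = real g / Dn g n n n" using fprod_Dn[OF g _ order.refl order.refl] y n by simp
  also have "Dn g n n n = (real (tsylv g n))^2" unfolding Dn_diag by (simp add: power2_eq_square)
  finally show ?thesis using y by simp
qed

lemma case_kn1:
  assumes g: "g \<ge> 1" and n: "n \<ge> 3" and yA: "y \<in> A_set g n"
    and mn: "\<forall>x\<in>A_set g n. f_prod (n-1) y \<le> f_prod (n-1) x"
  shows "((n = 3 \<and> g = 1) \<longrightarrow> f_prod 2 y = 1/9 \<and> y = ypt 1 3 1)
          \<and> (\<not> (n = 3 \<and> g = 1) \<longrightarrow>
               f_prod (n - 1) y = real g / (2 * (real (tsylv g (n - 1)))^2)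
             \<and> y \<in> {ypt 2 3 1, ypt 1 4 2, ypt g n (n - 1)})"
proof -
  have Dlast: "Dn g n (n-1) (n-1) = 2 * (real (tsylv g (n - 1)))^2"
    unfolding Dn_diag using n by (simp add: power2_eq_square)
  have ms: "(\<exists>J. 1 \<le> J \<and> J \<le> n-1 \<and> (n-1 = n \<longrightarrow> J = n) \<and> y = ypt g n J) \<or> (n-1 < n \<and> (\<forall>l. 1 \<le> l \<and> l \<le> n-1 \<longrightarrow> tight y g n l))"
    by (rule minimizer_structure[OF g n _ _ _ yA mn]) (use n in auto)
  have T2: "real (tsylv g (n-1)) \<ge> 2" using tsylv_ge2 g n by simp
  obtain J0 where J0: "1 \<le> J0" "J0 \<le> n - 1" "y = ypt g n J0"
  proof (cases "\<exists>J. 1 \<le> J \<and> J \<le> n-1 \<and> (n-1 = n \<longrightarrow> J = n) \<and> y = ypt g n J")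
    case True then show ?thesis using that by blast
  next
    case False
    then have t: "\<forall>l. 1 \<le> l \<and> l < n \<longrightarrow> tight y g n l" using ms by auto
    have "f_prod (n-1) y = real g / real (tsylv g n)"
      using tight_prefix[OF yA g order.refl t, of "n-1"] f_prod_nth[of "n-1" y] A_facts(1)[OF yA] n prod_inv_sylv[OF g, of "n-1"] by simp
    moreover have "f_prod (n-1) y \<le> f_prod (n-1) (ypt g n (n-1))"
      using mn ypt_in_A[OF g, of "n-1" n] n by auto
    moreover have "f_prod (n-1) (ypt g n (n-1)) = real g / (2 * (real (tsylv g (n - 1)))^2)"
      using fprod_Dn[OF g _ order.refl, of "n-1" n] n Dlast by simp
    moreover have "real (tsylv g n) = real (tsylv g (n-1)) * (real (tsylv g (n-1)) + 1)"
      using tsylv_SS[of g "n-2"] n by (simp add: numeral_2_eq_2 Suc_diff_Suc)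
    ultimately have "real g / (real (tsylv g (n-1)) * (real (tsylv g (n-1)) + 1)) \<le> real g / (2 * (real (tsylv g (n - 1)))^2)"
      by simp
    moreover have "real (tsylv g (n-1)) * (real (tsylv g (n-1)) + 1) < 2 * (real (tsylv g (n - 1)))^2"
      using T2 by (simp add: power2_eq_square algebra_simps)
    moreover have "real (tsylv g (n-1)) * (real (tsylv g (n-1)) + 1) > 0" using T2 by simp
    moreover have "real g > 0" using g by simp
    ultimately have a: "real g / (real (tsylv g (n-1)) * (real (tsylv g (n-1)) + 1)) \<le> real g / (2 * (real (tsylv g (n - 1)))^2)"
      and b: "real (tsylv g (n-1)) * (real (tsylv g (n-1)) + 1) < 2 * (real (tsylv g (n - 1)))^2"
      and c: "real (tsylv g (n-1)) * (real (tsylv g (n-1)) + 1) > 0" and d: "real g > 0" by auto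
    have "real g / (2 * (real (tsylv g (n - 1)))^2) < real g / (real (tsylv g (n-1)) * (real (tsylv g (n-1)) + 1))"
    proof (rule divide_strict_left_mono[OF b])
      show "0 < real g" by (rule d)
      have "0 < 2 * (real (tsylv g (n - 1)))^2" using b c by linarith
      then show "0 < 2 * (real (tsylv g (n - 1)))^2 * (real (tsylv g (n-1)) * (real (tsylv g (n-1)) + 1))"
        using c by (rule mult_pos_pos)
    qed
    then show ?thesis using a by simp
  qed
  have Dle: "Dn g n (n-1) J \<le> Dn g n (n-1) J0" if "1 \<le> J" "J \<le> n - 1" for J
    using Dn_le_of_min[OF g J0(3) J0(1,2) that _ mn] by simp
  have n1: "1 \<le> n - 1" using n by simp
  have Dlast_le: "Dn g n (n-1) (n-1) \<le> Dn g n (n-1) J0" using Dle[OF n1 order.refl] .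
  have fy: "f_prod (n-1) y = real g / Dn g n (n-1) J0" using fprod_Dn[OF g J0(1,2)] J0(3) by simp
  show ?thesis
  proof (cases "n = 3 \<and> g = 1")
    case True
    then have t1: "tsylv g 1 = 1" using tsylv_1 by simp
    have n3: "1 + 2 = n" using True by simp
    have c: "Dn g n (n-1) (1+1) < Dn g n (n-1) 1" using chainA_last(3)[OF g order.refl n3 t1] .
    have two: "(1::nat) + 1 = 2" by simp
    note c = c[unfolded two]
    have "J0 = 1"
    proof (rule ccontr)
      assume "J0 \<noteq> 1" then have "J0 = 2" using J0 True by simp
      moreover have "Dn g n (n-1) 1 \<le> Dn g n (n-1) J0" using Dle[of 1] True by simp
      ultimately show False using c by simp
    qed
    moreover have "Dn 1 3 2 1 = 9" unfolding Dn_def by (simp add: tsylv_def)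
    ultimately show ?thesis using fy J0 True by simp
  next
    case False
    have Tn2: "tsylv g (n-2) \<ge> 2"
    proof (cases "n - 2 \<ge> 2")
      case True then show ?thesis using tsylv_ge2[OF g True] by simp
    next
      case False then have "n = 3" using n by simp
      then show ?thesis using \<open>\<not> (n = 3 \<and> g = 1)\<close> g tsylv_1 by simp
    qed
    have ja: "1 \<le> n - 2" "n - 2 + 2 = n" "n - 2 + 1 = n - 1" using n by auto
    have CL1: "tsylv g (n-2) \<ge> 3 \<Longrightarrow> Dn g n (n-1) (n-2) < Dn g n (n-1) (n-1)"
      using chainA_last(1)[OF g ja(1) ja(2)] unfolding ja(3) .
    have CL2: "tsylv g (n-2) = 2 \<Longrightarrow> Dn g n (n-1) (n-2) = Dn g n (n-1) (n-1)"
      using chainA_last(2)[OF g ja(1) ja(2)] unfolding ja(3) .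
    have lastle: "Dn g n (n-1) (n-2) \<le> Dn g n (n-1) (n-1)"
    proof (cases "tsylv g (n-2) = 2")
      case True then show ?thesis using CL2 by simp
    next
      case False then have "tsylv g (n-2) \<ge> 3" using Tn2 by simp
      then show ?thesis using CL1 by simp
    qed
    have concl: "f_prod (n - 1) y = real g / (2 * (real (tsylv g (n - 1)))^2) \<and> y \<in> {ypt 2 3 1, ypt 1 4 2, ypt g n (n - 1)}"
    proof -
      consider "J0 < n - 2" | "J0 = n - 2" | "J0 = n - 1" using J0 by linarith
      then show ?thesis
      proof cases
        case 1
        have "Dn g n (n-1) J0 < Dn g n (n-1) (n-2)"
          by (rule chain_mono[of "n-2"]) (use chainA_strict[OF g] J0 1 in auto)
        then have "Dn g n (n-1) J0 < Dn g n (n-1) (n-1)" using lastle by simp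
        then show ?thesis using Dlast_le by simp
      next
        case 2
        have "tsylv g (n-2) = 2"
        proof (rule ccontr)
          assume "tsylv g (n-2) \<noteq> 2" then have "tsylv g (n-2) \<ge> 3" using Tn2 by simp
          then have "Dn g n (n-1) (n-2) < Dn g n (n-1) (n-1)" using CL1 by simp
          then show False using Dlast_le 2 by simp
        qed
        then have eqD: "Dn g n (n-1) (n-2) = Dn g n (n-1) (n-1)" using CL2 by simp
        have "(n - 2 = 1 \<and> g = 2) \<or> (n - 2 = 2 \<and> g = 1)" using tsylv_eq2[OF g _ \<open>tsylv g (n-2) = 2\<close>] n by simp
        then have "(n = 3 \<and> g = 2 \<and> J0 = 1) \<or> (n = 4 \<and> g = 1 \<and> J0 = 2)" using 2 n by auto
        then have "y = ypt 2 3 1 \<or> y = ypt 1 4 2" using J0(3) by auto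
        then show ?thesis using fy 2 eqD Dlast by auto
      next
        case 3 then show ?thesis using fy J0 Dlast by simp
      qed
    qed
    show ?thesis using concl False by blast
  qed
qed

lemma case_kn2:
  assumes g: "g \<ge> 1" and n: "n \<ge> 3" and yA: "y \<in> A_set g n"
    and mn: "\<forall>x\<in>A_set g n. f_prod (n-2) y \<le> f_prod (n-2) x"
  shows "((n = 4 \<and> g \<in> {1, 2}) \<longrightarrow> f_prod 2 y = 1 / (16 * (real g)^2) \<and> y = ypt g 4 1)
          \<and> ((n = 5 \<and> g = 1) \<longrightarrow> f_prod 3 y = 1/128 \<and> y = ypt 1 5 2)
          \<and> (\<not> (n = 4 \<and> g \<in> {1, 2}) \<and> \<not> (n = 5 \<and> g = 1) \<longrightarrow>
               f_prod (n - 2) y = real g / (3 * (real (tsylv g (n - 2)))^2)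
             \<and> y \<in> {ypt 3 4 1, ypt g n (n - 2)})"
proof -
  have k1: "1 \<le> n - 2" using n by simp
  have Dlast: "Dn g n (n-2) (n-2) = 3 * (real (tsylv g (n - 2)))^2"
    unfolding Dn_diag using n by (simp add: power2_eq_square)
  have ms: "(\<exists>J. 1 \<le> J \<and> J \<le> n-2 \<and> (n-2 = n \<longrightarrow> J = n) \<and> y = ypt g n J) \<or> (n-2 < n \<and> (\<forall>l. 1 \<le> l \<and> l \<le> n-2 \<longrightarrow> tight y g n l))"
    by (rule minimizer_structure[OF g n _ _ _ yA mn]) (use n in auto)
  have T1: "real (tsylv g (n-2)) \<ge> 1" using tsylv_ge1 g k1 by simp
  obtain J0 where J0: "1 \<le> J0" "J0 \<le> n - 2" "y = ypt g n J0"
  proof (cases "\<exists>J. 1 \<le> J \<and> J \<le> n-2 \<and> (n-2 = n \<longrightarrow> J = n) \<and> y = ypt g n J")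
    case True then show ?thesis using that by blast
  next
    case False
    then have t: "\<forall>l. 1 \<le> l \<and> l < n - 1 \<longrightarrow> tight y g n l" using ms by auto
    have nn: "n - 1 \<le> n" by simp
    have "f_prod (n-2) y = real g / real (tsylv g (n-1))"
      using tight_prefix[OF yA g nn t, of "n-2"] f_prod_nth[of "n-2" y] A_facts(1)[OF yA] n prod_inv_sylv[OF g, of "n-2"]
      by (simp add: Suc_diff_Suc numeral_2_eq_2)
    moreover have "f_prod (n-2) y \<le> f_prod (n-2) (ypt g n (n-2))"
      using mn ypt_in_A[OF g k1] n by auto
    moreover have "f_prod (n-2) (ypt g n (n-2)) = real g / (3 * (real (tsylv g (n - 2)))^2)"
      using fprod_Dn[OF g k1 order.refl, of n] n Dlast by simp
    moreover have "real (tsylv g (n-1)) = real (tsylv g (n-2)) * (real (tsylv g (n-2)) + 1)"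
      using tsylv_SS[of g "n-3"] n by (simp add: numeral_2_eq_2 numeral_3_eq_3 Suc_diff_Suc)
    ultimately have a: "real g / (real (tsylv g (n-2)) * (real (tsylv g (n-2)) + 1)) \<le> real g / (3 * (real (tsylv g (n - 2)))^2)"
      by simp
    have b: "real (tsylv g (n-2)) * (real (tsylv g (n-2)) + 1) < 3 * (real (tsylv g (n - 2)))^2"
      using T1 by (simp add: power2_eq_square algebra_simps)
    have c: "real (tsylv g (n-2)) * (real (tsylv g (n-2)) + 1) > 0" using T1 by simp
    have d: "real g > 0" using g by simp
    have "real g / (3 * (real (tsylv g (n - 2)))^2) < real g / (real (tsylv g (n-2)) * (real (tsylv g (n-2)) + 1))"
    proof (rule divide_strict_left_mono[OF b])
      show "0 < real g" by (rule d)
      have "0 < 3 * (real (tsylv g (n - 2)))^2" using b c by linarith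
      then show "0 < 3 * (real (tsylv g (n - 2)))^2 * (real (tsylv g (n-2)) * (real (tsylv g (n-2)) + 1))"
        using c by (rule mult_pos_pos)
    qed
    then show ?thesis using a by simp
  qed
  have Dle: "Dn g n (n-2) J \<le> Dn g n (n-2) J0" if "1 \<le> J" "J \<le> n - 2" for J
    using Dn_le_of_min[OF g J0(3) J0(1,2) that _ mn] by simp
  have Dlast_le: "Dn g n (n-2) (n-2) \<le> Dn g n (n-2) J0" using Dle[OF k1 order.refl] .
  have fy: "f_prod (n-2) y = real g / Dn g n (n-2) J0" using fprod_Dn[OF g J0(1,2)] J0(3) by simp
  show ?thesis
  proof (cases "n = 3")
    case True
    then have "J0 = 1" using J0 by simp
    then have "y = ypt g n (n-2)" "f_prod (n - 2) y = real g / (3 * (real (tsylv g (n - 2)))^2)"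
      using J0 fy Dlast True by auto
    then show ?thesis using True by auto
  next
    case False
    then have n4: "n \<ge> 4" using n by simp
    have jb: "1 \<le> n - 3" "n - 3 + 3 = n" "n - 3 + 1 = n - 2" using n4 by auto
    have CL1: "tsylv g (n-3) \<ge> 4 \<Longrightarrow> Dn g n (n-2) (n-3) < Dn g n (n-2) (n-2)"
      using chainB_last(1)[OF g jb(1) jb(2)] unfolding jb(3) .
    have CL2: "tsylv g (n-3) = 3 \<Longrightarrow> Dn g n (n-2) (n-3) = Dn g n (n-2) (n-2)"
      using chainB_last(2)[OF g jb(1) jb(2)] unfolding jb(3) .
    have CL3: "tsylv g (n-3) \<le> 2 \<Longrightarrow> Dn g n (n-2) (n-2) < Dn g n (n-2) (n-3)"
      using chainB_last(3)[OF g jb(1) jb(2)] unfolding jb(3) .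
    have chain: "Dn g n (n-2) J < Dn g n (n-2) (n-3)" if "1 \<le> J" "J < n - 3" for J
      by (rule chain_mono[of "n-3"]) (use chainB_strict[OF g] that in auto)
    have Dm3_le: "Dn g n (n-2) (n-3) \<le> Dn g n (n-2) J0" using Dle[OF jb(1)] n4 by simp
    have Tge: "tsylv g (n-3) \<ge> 1" using tsylv_ge1[OF g jb(1)] by simp
    have exc_iff: "tsylv g (n-3) \<le> 2 \<longleftrightarrow> (n = 4 \<and> g \<in> {1, 2}) \<or> (n = 5 \<and> g = 1)"
    proof
      assume "tsylv g (n-3) \<le> 2"
      then have "tsylv g (n-3) = 1 \<or> tsylv g (n-3) = 2" using Tge by linarith
      then show "(n = 4 \<and> g \<in> {1, 2}) \<or> (n = 5 \<and> g = 1)"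
        using tsylv_eq1[OF g jb(1)] tsylv_eq2[OF g jb(1)] n4 by auto
    next
      assume "(n = 4 \<and> g \<in> {1, 2}) \<or> (n = 5 \<and> g = 1)"
      then show "tsylv g (n-3) \<le> 2"
      proof
        assume "n = 4 \<and> g \<in> {1, 2}" then show ?thesis using tsylv_1 by auto
      next
        assume a: "n = 5 \<and> g = 1"
        then have "real (tsylv g (n-3)) = 2" using tsylv_2[of 1] by (simp add: numeral_2_eq_2)
        then show ?thesis by simp
      qed
    qed
    show ?thesis
    proof (cases "tsylv g (n-3) \<le> 2")
      case True
      have "J0 = n - 3"
      proof (rule ccontr)
        assume ne: "J0 \<noteq> n - 3"
        consider "J0 < n - 3" | "J0 = n - 2" using ne J0 by linarith
        then show False
        proof cases
          case 1 then show ?thesis using chain[OF J0(1) 1] Dm3_le by simp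
        next
          case 2 then show ?thesis using CL3[OF True] Dm3_le by simp
        qed
      qed
      have ex: "(n = 4 \<and> g \<in> {1, 2}) \<or> (n = 5 \<and> g = 1)" using exc_iff True by simp
      then show ?thesis
      proof
        assume a: "n = 4 \<and> g \<in> {1, 2}"
        then have y: "y = ypt g 4 1" using J0(3) \<open>J0 = n - 3\<close> by simp
        have "Dn g 4 2 1 = 16 * (real g)^2 * real g" unfolding Dn_def using tsylv_1[of g]
          by (simp add: power2_eq_square)
        then have "f_prod 2 y = 1 / (16 * (real g)^2)" using fy a \<open>J0 = n - 3\<close> g by (simp add: power2_eq_square)
        then show ?thesis using a y by auto
      next
        assume a: "n = 5 \<and> g = 1"
        then have y: "y = ypt 1 5 2" using J0(3) \<open>J0 = n - 3\<close> by simp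
        have "real (tsylv 1 2) = 2" using tsylv_2[of 1] by simp
        then have "Dn 1 5 3 2 = 128" unfolding Dn_def by simp
        then have "f_prod 3 y = 1/128" using fy a \<open>J0 = n - 3\<close> by simp
        then show ?thesis using a y by auto
      qed
    next
      case False
      then have nex: "\<not> (n = 4 \<and> g \<in> {1, 2}) \<and> \<not> (n = 5 \<and> g = 1)" using exc_iff by simp
      have m3le: "Dn g n (n-2) (n-3) \<le> Dn g n (n-2) (n-2)"
      proof (cases "tsylv g (n-3) = 3")
        case True then show ?thesis using CL2 by simp
      next
        case False then have "tsylv g (n-3) \<ge> 4" using \<open>\<not> tsylv g (n-3) \<le> 2\<close> by simp
        then show ?thesis using CL1 by simp
      qed
      have concl: "f_prod (n - 2) y = real g / (3 * (real (tsylv g (n - 2)))^2) \<and> y \<in> {ypt 3 4 1, ypt g n (n - 2)}"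
      proof -
        consider "J0 < n - 3" | "J0 = n - 3" | "J0 = n - 2" using J0 by linarith
        then show ?thesis
        proof cases
          case 1
          then have "Dn g n (n-2) J0 < Dn g n (n-2) (n-2)" using chain[OF J0(1) 1] m3le by simp
          then show ?thesis using Dlast_le by simp
        next
          case 2
          have "tsylv g (n-3) = 3"
          proof (rule ccontr)
            assume "tsylv g (n-3) \<noteq> 3" then have "tsylv g (n-3) \<ge> 4" using \<open>\<not> tsylv g (n-3) \<le> 2\<close> by simp
            then show False using CL1 Dlast_le 2 by simp
          qed
          then have eqD: "Dn g n (n-2) (n-3) = Dn g n (n-2) (n-2)" using CL2 by simp
          have "n - 3 = 1 \<and> g = 3" using tsylv_eq3[OF g jb(1) \<open>tsylv g (n-3) = 3\<close>] .
          then have "n = 4 \<and> g = 3" using n4 by linarith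
          then have "y = ypt 3 4 1" using J0(3) 2 by simp
          then show ?thesis using fy 2 eqD Dlast by auto
        next
          case 3 then show ?thesis using fy J0 Dlast by simp
        qed
      qed
      show ?thesis using concl nex by blast
    qed
  qed
qed


theorem proposition3p10:
  fixes g n k :: nat and y :: "real list"
  assumes "g \<ge> 1" and "n \<ge> 3" and "1 \<le> k" and "k \<le> n"
    and "y \<in> A_set g n"
    and "\<forall>x\<in>A_set g n. f_prod k y \<le> f_prod k x"
  shows "(k = n \<longrightarrow>
            f_prod n y = real g / (real (tsylv g n))^2 \<and> y = ypt g n n)
       \<and> (k = n - 1 \<longrightarrow>
            ((n = 3 \<and> g = 1) \<longrightarrow> f_prod 2 y = 1/9 \<and> y = ypt 1 3 1)
          \<and> (\<not> (n = 3 \<and> g = 1) \<longrightarrow>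
               f_prod (n - 1) y = real g / (2 * (real (tsylv g (n - 1)))^2)
             \<and> y \<in> {ypt 2 3 1, ypt 1 4 2, ypt g n (n - 1)}))
       \<and> (k = n - 2 \<longrightarrow>
            ((n = 4 \<and> g \<in> {1, 2}) \<longrightarrow> f_prod 2 y = 1 / (16 * (real g)^2) \<and> y = ypt g 4 1)
          \<and> ((n = 5 \<and> g = 1) \<longrightarrow> f_prod 3 y = 1/128 \<and> y = ypt 1 5 2)
          \<and> (\<not> (n = 4 \<and> g \<in> {1, 2}) \<and> \<not> (n = 5 \<and> g = 1) \<longrightarrow>
               f_prod (n - 2) y = real g / (3 * (real (tsylv g (n - 2)))^2)
             \<and> y \<in> {ypt 3 4 1, ypt g n (n - 2)}))"
proof -
  have A: "k = n \<longrightarrow> f_prod n y = real g / (real (tsylv g n))^2 \<and> y = ypt g n n"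
  proof
    assume "k = n"
    then show "f_prod n y = real g / (real (tsylv g n))^2 \<and> y = ypt g n n"
    proof -
      have m: "\<forall>x\<in>A_set g n. f_prod (n) y \<le> f_prod (n) x" using assms(6) \<open>k = n\<close> by simp
      show ?thesis using case_kn[OF assms(1,2,5) m] by blast
    qed
  qed
  have B: "k = n - 1 \<longrightarrow>
            ((n = 3 \<and> g = 1) \<longrightarrow> f_prod 2 y = 1/9 \<and> y = ypt 1 3 1)
          \<and> (\<not> (n = 3 \<and> g = 1) \<longrightarrow>
               f_prod (n - 1) y = real g / (2 * (real (tsylv g (n - 1)))^2)
             \<and> y \<in> {ypt 2 3 1, ypt 1 4 2, ypt g n (n - 1)})"
  proof
    assume "k = n - 1"
    then show "((n = 3 \<and> g = 1) \<longrightarrow> f_prod 2 y = 1/9 \<and> y = ypt 1 3 1)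
          \<and> (\<not> (n = 3 \<and> g = 1) \<longrightarrow>
               f_prod (n - 1) y = real g / (2 * (real (tsylv g (n - 1)))^2)
             \<and> y \<in> {ypt 2 3 1, ypt 1 4 2, ypt g n (n - 1)})"
    proof -
      have m: "\<forall>x\<in>A_set g n. f_prod (n-1) y \<le> f_prod (n-1) x" using assms(6) \<open>k = n - 1\<close> by simp
      show ?thesis using case_kn1[OF assms(1,2,5) m] by blast
    qed
  qed
  have C: "k = n - 2 \<longrightarrow>
            ((n = 4 \<and> g \<in> {1, 2}) \<longrightarrow> f_prod 2 y = 1 / (16 * (real g)^2) \<and> y = ypt g 4 1)
          \<and> ((n = 5 \<and> g = 1) \<longrightarrow> f_prod 3 y = 1/128 \<and> y = ypt 1 5 2)
          \<and> (\<not> (n = 4 \<and> g \<in> {1, 2}) \<and> \<not> (n = 5 \<and> g = 1) \<longrightarrow>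
               f_prod (n - 2) y = real g / (3 * (real (tsylv g (n - 2)))^2)
             \<and> y \<in> {ypt 3 4 1, ypt g n (n - 2)})"
  proof
    assume "k = n - 2"
    then show "((n = 4 \<and> g \<in> {1, 2}) \<longrightarrow> f_prod 2 y = 1 / (16 * (real g)^2) \<and> y = ypt g 4 1)
          \<and> ((n = 5 \<and> g = 1) \<longrightarrow> f_prod 3 y = 1/128 \<and> y = ypt 1 5 2)
          \<and> (\<not> (n = 4 \<and> g \<in> {1, 2}) \<and> \<not> (n = 5 \<and> g = 1) \<longrightarrow>
               f_prod (n - 2) y = real g / (3 * (real (tsylv g (n - 2)))^2)
             \<and> y \<in> {ypt 3 4 1, ypt g n (n - 2)})"
    proof -
      have m: "\<forall>x\<in>A_set g n. f_prod (n-2) y \<le> f_prod (n-2) x" using assms(6) \<open>k = n - 2\<close> by simp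
      show ?thesis using case_kn2[OF assms(1,2,5) m] by blast
    qed
  qed
  show ?thesis using A B C by blast
qed

end
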